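(* Let $X_1,X_2,\ldots$ be an irreducible Markov chain on a finite state space ${\cal X}$ with invariant distribution $\pi$. Let ${\cal S}\subseteq{\cal X}$ be non-empty, and $f:{\cal X}\to\mathbb{R}$ with $E_\pi[f]=\mu$. Define $N(k)=\min\{n:\sum_{t=1}^n I_{\cal S}(X_t)=k\}$, where $I_{\cal S}$ is the indicator of ${\cal S}$, and the estimators $\hat\mu_n=\frac1n\sum_{t=1}^n f(X_t)$ and $\tilde\mu_k=\frac1{N(k)}\sum_{t=1}^{N(k)} f(X_t)$. Then $\lim_{n\to\infty} n\,\mathrm{Var}(\hat\mu_n)=\lim_{n\to\infty} n\,\mathrm{Var}(\tilde\mu_{\lceil n\pi({\cal S})\rceil})$.
   Context: $\pi({\cal S})=\sum_{x\in{\cal S}}\pi(x)$. *)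

theory Defs
  imports "HOL-Probability.Probability"
begin

definition stochastic_matrix :: "('a::finite \<Rightarrow> 'a \<Rightarrow> real) \<Rightarrow> bool" where
  "stochastic_matrix P \<longleftrightarrow> (\<forall>x y. P x y \<ge> 0) \<and> (\<forall>x. (\<Sum>y\<in>UNIV. P x y) = 1)"

definition prob_vector :: "('a::finite \<Rightarrow> real) \<Rightarrow> bool" where
  "prob_vector p \<longleftrightarrow> (\<forall>x. p x \<ge> 0) \<and> (\<Sum>x\<in>UNIV. p x) = 1"

fun mpow :: "('a::finite \<Rightarrow> 'a \<Rightarrow> real) \<Rightarrow> nat \<Rightarrow> 'a \<Rightarrow> 'a \<Rightarrow> real" where
  "mpow P 0 x y = (if x = y then 1 else 0)"
| "mpow P (Suc n) x y = (\<Sum>z\<in>UNIV. mpow P n x z * P z y)"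

definition irreducible_chain :: "('a::finite \<Rightarrow> 'a \<Rightarrow> real) \<Rightarrow> bool" where
  "irreducible_chain P \<longleftrightarrow> (\<forall>x y. \<exists>n. mpow P n x y > 0)"

definition invariant_distribution :: "('a::finite \<Rightarrow> 'a \<Rightarrow> real) \<Rightarrow> ('a \<Rightarrow> real) \<Rightarrow> bool" where
  "invariant_distribution P \<pi> \<longleftrightarrow> prob_vector \<pi> \<and> (\<forall>y. (\<Sum>x\<in>UNIV. \<pi> x * P x y) = \<pi> y)"

text \<open>X 1, X 2, ... is a Markov chain on M with initial distribution p0 and transition
  matrix P: each X t is a random variable and the finite-dimensional distributions are
  the Markov ones. (X 0 is unused; indexing follows the paper.)\<close>
definition markov_chain ::
  "'b measure \<Rightarrow> (nat \<Rightarrow> 'b \<Rightarrow> 'a::finite) \<Rightarrow> ('a \<Rightarrow> real) \<Rightarrow> ('a \<Rightarrow> 'a \<Rightarrow> real) \<Rightarrow> bool" where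
  "markov_chain M X p0 P \<longleftrightarrow>
     prob_space M \<and> prob_vector p0 \<and> stochastic_matrix P \<and>
     (\<forall>t. X t \<in> measurable M (count_space UNIV)) \<and>
     (\<forall>n\<ge>1. \<forall>x::nat \<Rightarrow> 'a.
        measure M {\<omega>\<in>space M. \<forall>i\<in>{1..n}. X i \<omega> = x i}
          = p0 (x 1) * (\<Prod>i\<in>{1..<n}. P (x i) (x (Suc i))))"

definition dist_mass :: "('a \<Rightarrow> real) \<Rightarrow> 'a set \<Rightarrow> real" where
  "dist_mass \<pi> S = (\<Sum>x\<in>S. \<pi> x)"

definition visits :: "'a set \<Rightarrow> (nat \<Rightarrow> 'b \<Rightarrow> 'a) \<Rightarrow> nat \<Rightarrow> 'b \<Rightarrow> nat" where
  "visits S X n \<omega> = card {t\<in>{1..n}. X t \<omega> \<in> S}"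

definition hitN :: "'a set \<Rightarrow> (nat \<Rightarrow> 'b \<Rightarrow> 'a) \<Rightarrow> nat \<Rightarrow> 'b \<Rightarrow> nat" where
  "hitN S X k \<omega> = (LEAST n. visits S X n \<omega> = k)"

definition mu_hat :: "('a \<Rightarrow> real) \<Rightarrow> (nat \<Rightarrow> 'b \<Rightarrow> 'a) \<Rightarrow> nat \<Rightarrow> 'b \<Rightarrow> real" where
  "mu_hat f X n \<omega> = (1 / real n) * (\<Sum>t=1..n. f (X t \<omega>))"

definition mu_tilde :: "'a set \<Rightarrow> ('a \<Rightarrow> real) \<Rightarrow> (nat \<Rightarrow> 'b \<Rightarrow> 'a) \<Rightarrow> nat \<Rightarrow> 'b \<Rightarrow> real" where
  "mu_tilde S f X k \<omega> = (1 / real (hitN S X k \<omega>)) * (\<Sum>t=1..hitN S X k \<omega>. f (X t \<omega>))"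

end

theory Submission
  imports Defs "HOL-Real_Asymp.Real_Asymp"
begin

definition paths :: "nat \<Rightarrow> (nat \<Rightarrow> 'a) set" where
  "paths m = Pi\<^sub>E {1..m} (\<lambda>_. UNIV)"
definition pw :: "('a \<Rightarrow> real) \<Rightarrow> ('a \<Rightarrow> 'a \<Rightarrow> real) \<Rightarrow> nat \<Rightarrow> (nat \<Rightarrow> 'a) \<Rightarrow> real" where
  "pw p0 P m x = p0 (x 1) * (\<Prod>i\<in>{1..<m}. P (x i) (x (Suc i)))"
definition pathE :: "('a \<Rightarrow> real) \<Rightarrow> ('a \<Rightarrow> 'a \<Rightarrow> real) \<Rightarrow> nat \<Rightarrow> ((nat \<Rightarrow> 'a) \<Rightarrow> real) \<Rightarrow> real" where
  "pathE p0 P m G = (\<Sum>x\<in>paths m. pw p0 P m x * G x)"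
definition dep :: "nat \<Rightarrow> ((nat \<Rightarrow> 'a) \<Rightarrow> 'c) \<Rightarrow> bool" where
  "dep m G \<longleftrightarrow> (\<forall>x x'. (\<forall>i\<in>{1..m}. x i = x' i) \<longrightarrow> G x = G x')"

lemma finite_paths[simp]: "finite (paths m :: (nat \<Rightarrow> 'a::finite) set)"
  unfolding paths_def by (intro finite_PiE) auto

lemma pathE_expectation:
  fixes X :: "nat \<Rightarrow> 'b \<Rightarrow> 'a::finite"
  assumes mc: "markov_chain M X p0 P" and m: "m \<ge> 1" and G: "dep m G"
  shows "integrable M (\<lambda>\<omega>. G (\<lambda>i. X i \<omega>))"
    and "prob_space.expectation M (\<lambda>\<omega>. G (\<lambda>i. X i \<omega>)) = pathE p0 P m G"
proof -
  have ps: "prob_space M" and Xm[measurable]: "\<And>t. X t \<in> measurable M (count_space UNIV)"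
    and law: "\<And>x. measure M {\<omega>\<in>space M. \<forall>i\<in>{1..m}. X i \<omega> = x i} = pw p0 P m x"
    using mc m unfolding markov_chain_def pw_def by auto
  interpret prob_space M by (rule ps)
  define A where "A x = {\<omega>\<in>space M. \<forall>i\<in>{1..m}. X i \<omega> = x i}" for x
  have Asets: "A x \<in> sets M" for x
    unfolding A_def by measurable
  have eq: "G (\<lambda>i. X i \<omega>) = (\<Sum>x\<in>paths m. G x * indicator (A x) \<omega>)" if \<omega>: "\<omega> \<in> space M" for \<omega>
  proof -
    define x0 where "x0 = restrict (\<lambda>i. X i \<omega>) {1..m}"
    have x0p: "x0 \<in> paths m" unfolding paths_def x0_def by auto
    have iff: "\<omega> \<in> A x \<longleftrightarrow> x = x0" if "x \<in> paths m" for x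
    proof
      assume "\<omega> \<in> A x"
      then show "x = x0" using that unfolding A_def x0_def paths_def
        by (intro ext) (auto simp: PiE_def extensional_def)
    qed (use \<omega> in \<open>auto simp: A_def x0_def\<close>)
    have "(\<Sum>x\<in>paths m. G x * indicator (A x) \<omega>) = (\<Sum>x\<in>paths m. if x = x0 then G x else 0)"
      by (intro sum.cong) (auto simp: iff)
    also have "\<dots> = G x0" using x0p by simp
    also have "G x0 = G (\<lambda>i. X i \<omega>)" using G unfolding dep_def x0_def by auto
    finally show ?thesis by simp
  qed
  have int: "integrable M (\<lambda>\<omega>. \<Sum>x\<in>paths m. G x * indicator (A x) \<omega>)"
    using Asets by (intro Bochner_Integration.integrable_sum integrable_mult_right
        integrable_real_indicator) (auto simp: less_top[symmetric])
  show "integrable M (\<lambda>\<omega>. G (\<lambda>i. X i \<omega>))"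
    by (subst Bochner_Integration.integrable_cong[OF refl eq]) (use int in auto)
  have "expectation (\<lambda>\<omega>. G (\<lambda>i. X i \<omega>)) = integral\<^sup>L M (\<lambda>\<omega>. \<Sum>x\<in>paths m. G x * indicator (A x) \<omega>)"
    by (intro Bochner_Integration.integral_cong) (auto simp: eq)
  also have "\<dots> = (\<Sum>x\<in>paths m. G x * measure M (A x))"
    using Asets
    by (subst Bochner_Integration.integral_sum) (auto simp: less_top[symmetric])
  also have "\<dots> = pathE p0 P m G"
    unfolding pathE_def A_def law by (simp add: mult.commute)
  finally show "expectation (\<lambda>\<omega>. G (\<lambda>i. X i \<omega>)) = pathE p0 P m G" .
qed

lemma pw_Suc:
  assumes "m \<ge> 1"
  shows "pw p0 P (Suc m) (g(Suc m := y)) = pw p0 P m g * P (g m) y"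
proof -
  have "{1..<Suc m} = insert m {1..<m}" using assms by auto
  then have "(\<Prod>i\<in>{1..<Suc m}. P ((g(Suc m := y)) i) ((g(Suc m := y)) (Suc i)))
      = P (g m) y * (\<Prod>i\<in>{1..<m}. P ((g(Suc m := y)) i) ((g(Suc m := y)) (Suc i)))"
    by simp
  also have "(\<Prod>i\<in>{1..<m}. P ((g(Suc m := y)) i) ((g(Suc m := y)) (Suc i)))
      = (\<Prod>i\<in>{1..<m}. P (g i) (g (Suc i)))"
    by (intro prod.cong) auto
  finally show ?thesis using assms unfolding pw_def by simp
qed

lemma pathE_step_raw:
  fixes F :: "(nat \<Rightarrow> 'a::finite) \<Rightarrow> real"
  assumes m: "m \<ge> 1" and F: "dep m F"
  shows "pathE p0 P (Suc m) (\<lambda>x. F x * \<phi> (x m) (x (Suc m)))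
       = pathE p0 P m (\<lambda>x. F x * (\<Sum>y\<in>UNIV. P (x m) y * \<phi> (x m) y))"
proof -
  have ins: "{1..Suc m} = insert (Suc m) {1..m}" by auto
  have pe: "paths (Suc m) = (\<lambda>(y, g). g(Suc m := y)) ` (UNIV \<times> paths m)"
    unfolding paths_def ins PiE_insert_eq by simp
  have inj: "inj_on (\<lambda>(y, g). g(Suc m := y)) (UNIV \<times> (paths m :: (nat \<Rightarrow> 'a) set))"
    unfolding paths_def using inj_combinator[of "Suc m" "{1..m}" "\<lambda>_. UNIV :: 'a set"] by simp
  have Fu: "F (g(Suc m := y)) = F g" for g y
    using F unfolding dep_def by auto
  have "pathE p0 P (Suc m) (\<lambda>x. F x * \<phi> (x m) (x (Suc m)))
      = (\<Sum>(y, g)\<in>UNIV \<times> paths m. pw p0 P m g * P (g m) y * (F g * \<phi> (g m) y))"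
    unfolding pathE_def pe using m
    by (subst sum.reindex[OF inj]) (auto simp: pw_Suc Fu intro!: sum.cong)
  also have "\<dots> = (\<Sum>y\<in>UNIV. \<Sum>g\<in>paths m. pw p0 P m g * P (g m) y * (F g * \<phi> (g m) y))"
    by (subst sum.cartesian_product[symmetric]) simp
  also have "\<dots> = (\<Sum>g\<in>paths m. \<Sum>y\<in>UNIV. pw p0 P m g * P (g m) y * (F g * \<phi> (g m) y))"
    by (rule sum.swap)
  also have "\<dots> = pathE p0 P m (\<lambda>x. F x * (\<Sum>y\<in>UNIV. P (x m) y * \<phi> (x m) y))"
    unfolding pathE_def by (intro sum.cong refl) (simp add: sum_distrib_left mult_ac)
  finally show ?thesis .
qed

lemma dep_mono: "dep m G \<Longrightarrow> m \<le> m' \<Longrightarrow> dep m' G"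
  unfolding dep_def by auto

locale mchain =
  fixes M :: "'b measure" and X :: "nat \<Rightarrow> 'b \<Rightarrow> 'a::finite" and p0 :: "'a \<Rightarrow> real"
    and P :: "'a \<Rightarrow> 'a \<Rightarrow> real"
  assumes mc: "markov_chain M X p0 P"
begin

lemma ps: "prob_space M" using mc unfolding markov_chain_def by auto
lemma stoch: "stochastic_matrix P" using mc unfolding markov_chain_def by auto
lemma pv: "prob_vector p0" using mc unfolding markov_chain_def by auto
lemma P_nonneg: "P x y \<ge> 0" using stoch unfolding stochastic_matrix_def by auto
lemma P_sum: "(\<Sum>y\<in>UNIV. P x y) = 1" using stoch unfolding stochastic_matrix_def by auto
lemma Xmeas[measurable]: "X t \<in> measurable M (count_space UNIV)"
  using mc unfolding markov_chain_def by auto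

abbreviation E where "E m G \<equiv> pathE p0 P m G"

lemma pw_nonneg: "pw p0 P m x \<ge> 0"
  using pv P_nonneg unfolding pw_def prob_vector_def by (auto intro!: prod_nonneg mult_nonneg_nonneg)

lemma E_mono: "(\<And>x. G x \<le> H x) \<Longrightarrow> E m G \<le> E m H"
  unfolding pathE_def by (intro sum_mono mult_left_mono pw_nonneg) auto

lemma E_add: "E m (\<lambda>x. G x + H x) = E m G + E m H"
  unfolding pathE_def by (simp add: distrib_left sum.distrib)
lemma E_diff: "E m (\<lambda>x. G x - H x) = E m G - E m H"
  unfolding pathE_def by (simp add: right_diff_distrib sum_subtractf)
lemma E_cmult: "E m (\<lambda>x. c * G x) = c * E m G"
  unfolding pathE_def by (simp add: sum_distrib_left mult_ac)
lemma E_cmult_right: "E m (\<lambda>x. G x * c) = E m G * c"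
  unfolding pathE_def by (simp add: sum_distrib_left sum_distrib_right mult_ac)
lemma E_sum: "E m (\<lambda>x. \<Sum>i\<in>I. G i x) = (\<Sum>i\<in>I. E m (G i))"
  unfolding pathE_def by (simp add: sum_distrib_left sum.swap[of _ I])

lemma E_expectation:
  assumes "m \<ge> 1" "dep m G"
  shows "prob_space.expectation M (\<lambda>\<omega>. G (\<lambda>i. X i \<omega>)) = E m G"
  using pathE_expectation[OF mc assms] by simp

lemma E_integrable:
  fixes G :: "(nat \<Rightarrow> 'a) \<Rightarrow> real"
  assumes "m \<ge> 1" "dep m G"
  shows "integrable M (\<lambda>\<omega>. G (\<lambda>i. X i \<omega>))"
  using pathE_expectation[OF mc assms] by simp

lemma E_proj:
  assumes "1 \<le> m" "m \<le> m'" "dep m G"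
  shows "E m' G = E m G"
  using E_expectation[of m G] E_expectation[of m' G] assms dep_mono[OF assms(3,2)] by simp

lemma E_const: "m \<ge> 1 \<Longrightarrow> E m (\<lambda>_. c) = c"
  using E_expectation[of m "\<lambda>_. c"] prob_space.prob_space[OF ps] by (simp add: dep_def)

lemma E_step:
  assumes "1 \<le> j" "j < m" "dep j F"
  shows "E m (\<lambda>x. F x * \<phi> (x j) (x (Suc j)))
       = E m (\<lambda>x. F x * (\<Sum>y\<in>UNIV. P (x j) y * \<phi> (x j) y))"
proof -
  have d1: "dep (Suc j) (\<lambda>x. F x * \<phi> (x j) (x (Suc j)))"
    unfolding dep_def
  proof (intro allI impI)
    fix x x' :: "nat \<Rightarrow> 'a" assume h: "\<forall>i\<in>{1..Suc j}. x i = x' i"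
    then have "F x = F x'" using assms(3) unfolding dep_def by auto
    moreover have "x j = x' j" "x (Suc j) = x' (Suc j)" using h assms(1) by auto
    ultimately show "F x * \<phi> (x j) (x (Suc j)) = F x' * \<phi> (x' j) (x' (Suc j))" by simp
  qed
  have d2: "dep j (\<lambda>x. F x * (\<Sum>y\<in>UNIV. P (x j) y * \<phi> (x j) y))"
    unfolding dep_def
  proof (intro allI impI)
    fix x x' :: "nat \<Rightarrow> 'a" assume h: "\<forall>i\<in>{1..j}. x i = x' i"
    then have "F x = F x'" using assms(3) unfolding dep_def by auto
    moreover have "x j = x' j" using h assms(1) by auto
    ultimately show "F x * (\<Sum>y\<in>UNIV. P (x j) y * \<phi> (x j) y) = F x' * (\<Sum>y\<in>UNIV. P (x' j) y * \<phi> (x' j) y)" by simp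
  qed
  have "E m (\<lambda>x. F x * \<phi> (x j) (x (Suc j))) = E (Suc j) (\<lambda>x. F x * \<phi> (x j) (x (Suc j)))"
    using assms by (intro E_proj d1) auto
  also have "\<dots> = E j (\<lambda>x. F x * (\<Sum>y\<in>UNIV. P (x j) y * \<phi> (x j) y))"
    using assms by (intro pathE_step_raw) auto
  also have "\<dots> = E m (\<lambda>x. F x * (\<Sum>y\<in>UNIV. P (x j) y * \<phi> (x j) y))"
    using assms by (intro E_proj[symmetric] d2) auto
  finally show ?thesis .
qed

end

definition Pop :: "('a::finite \<Rightarrow> 'a \<Rightarrow> real) \<Rightarrow> ('a \<Rightarrow> real) \<Rightarrow> 'a \<Rightarrow> real" where
  "Pop A h x = (\<Sum>y\<in>UNIV. A x y * h y)"

lemma Pop_funpow: "(Pop A ^^ n) h x = (\<Sum>y\<in>UNIV. mpow A n x y * h y)"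
proof (induction n arbitrary: h x)
  case 0
  have "(\<Sum>y\<in>UNIV. (if x = y then 1 else 0) * h y) = (\<Sum>y\<in>UNIV. if x = y then h y else 0)"
    by (intro sum.cong) auto
  then show ?case by simp
next
  case (Suc n)
  have "(Pop A ^^ Suc n) h x = (Pop A ^^ n) (Pop A h) x" by (simp add: funpow_Suc_right del: funpow.simps)
  also have "\<dots> = (\<Sum>y\<in>UNIV. mpow A n x y * (\<Sum>z\<in>UNIV. A y z * h z))" by (simp add: Suc Pop_def)
  also have "\<dots> = (\<Sum>z\<in>UNIV. (\<Sum>y\<in>UNIV. mpow A n x y * A y z) * h z)"
    by (simp add: sum_distrib_left sum_distrib_right mult.assoc mult.left_commute, rule sum.swap)
  finally show ?case by simp
qed

lemma Pop_sum: "Pop A (\<lambda>y. \<Sum>i\<in>I. F i y) x = (\<Sum>i\<in>I. Pop A (F i) x)"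
  unfolding Pop_def by (simp add: sum_distrib_left sum.swap[of _ I])
lemma Pop_diff: "Pop A (\<lambda>y. F y - G y) x = Pop A F x - Pop A G x"
  unfolding Pop_def by (simp add: right_diff_distrib sum_subtractf)
lemma Pop_cmult: "Pop A (\<lambda>y. c * F y) x = c * Pop A F x"
  unfolding Pop_def by (simp add: sum_distrib_left mult_ac)

lemma mpow_nonneg: "(\<And>x y. A x y \<ge> 0) \<Longrightarrow> mpow A n x y \<ge> 0"
  by (induction n arbitrary: y) (auto intro!: sum_nonneg mult_nonneg_nonneg)

lemma mpow_stoch: "stochastic_matrix A \<Longrightarrow> (\<Sum>y\<in>UNIV. mpow A n x y) = 1"
proof (induction n)
  case 0 then show ?case by simp
next
  case (Suc n)
  have "(\<Sum>y\<in>UNIV. mpow A (Suc n) x y) = (\<Sum>z\<in>UNIV. mpow A n x z * (\<Sum>y\<in>UNIV. A z y))"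
    by (simp add: sum_distrib_left, rule sum.swap)
  also have "\<dots> = 1" using Suc by (simp add: stochastic_matrix_def)
  finally show ?case .
qed

lemma mpow_inv: "(\<And>y. (\<Sum>x\<in>UNIV. \<pi> x * A x y) = \<pi> y) \<Longrightarrow> (\<Sum>x\<in>UNIV. \<pi> x * mpow A n x y) = \<pi> y"
proof (induction n arbitrary: y)
  case 0
  have "(\<Sum>x\<in>UNIV. \<pi> x * (if x = y then 1 else 0)) = (\<Sum>x\<in>UNIV. if x = y then \<pi> x else 0)"
    by (intro sum.cong) auto
  then show ?case by simp
next
  case (Suc n)
  have "(\<Sum>x\<in>UNIV. \<pi> x * mpow A (Suc n) x y) = (\<Sum>z\<in>UNIV. (\<Sum>x\<in>UNIV. \<pi> x * mpow A n x z) * A z y)"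
    by (simp add: sum_distrib_left sum_distrib_right mult.assoc mult.left_commute, rule sum.swap)
  also have "\<dots> = \<pi> y" using Suc by simp
  finally show ?case .
qed

lemma inv_Pop: "(\<And>y. (\<Sum>x\<in>UNIV. \<pi> x * A x y) = \<pi> y) \<Longrightarrow> (\<Sum>x\<in>UNIV. \<pi> x * (Pop A ^^ n) g x) = (\<Sum>x\<in>UNIV. \<pi> x * g x)"
proof -
  assume a: "\<And>y. (\<Sum>x\<in>UNIV. \<pi> x * A x y) = \<pi> y"
  have "(\<Sum>x\<in>UNIV. \<pi> x * (Pop A ^^ n) g x) = (\<Sum>y\<in>UNIV. (\<Sum>x\<in>UNIV. \<pi> x * mpow A n x y) * g y)"
    unfolding Pop_funpow by (simp add: sum_distrib_left sum_distrib_right mult.assoc mult.left_commute, rule sum.swap)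
  also have "\<dots> = (\<Sum>x\<in>UNIV. \<pi> x * g x)" using mpow_inv[of \<pi> A, OF a] by simp
  finally show ?thesis .
qed

definition osc :: "('a::finite \<Rightarrow> real) \<Rightarrow> real" where
  "osc g = Max (range g) - Min (range g)"

lemma osc_ge: "g x - g x' \<le> osc g"
  unfolding osc_def by (intro diff_mono Max_ge Min_le) auto

lemma doeblin:
  fixes r :: "'a::finite \<Rightarrow> 'a \<Rightarrow> real"
  assumes st: "stochastic_matrix r" and lb: "\<And>x y. r x y \<ge> \<delta>" and d0: "\<delta> \<ge> 0"
  shows "osc (\<lambda>x. \<Sum>y\<in>UNIV. r x y * g y) \<le> (1 - \<delta>) * osc g"
proof -
  define Mx where "Mx = Max (range g)"
  define Mn where "Mn = Min (range g)"
  have gM: "g y \<le> Mx" "Mn \<le> g y" for y unfolding Mx_def Mn_def by auto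
  have key: "(\<Sum>y\<in>UNIV. r x y * g y) - (\<Sum>y\<in>UNIV. r x' y * g y) \<le> (1 - \<delta>) * (Mx - Mn)" for x x'
  proof -
    define m where "m y = min (r x y) (r x' y)" for y
    have sx: "(\<Sum>y\<in>UNIV. r x y) = 1" "(\<Sum>y\<in>UNIV. r x' y) = 1" using st by (auto simp: stochastic_matrix_def)
    obtain y0 :: 'a where True by simp
    have "\<delta> \<le> m y0" using lb unfolding m_def by auto
    also have "m y0 \<le> (\<Sum>y\<in>UNIV. m y)"
      by (rule member_le_sum) (auto simp: m_def intro: lb order_trans[OF d0])
    finally have sm: "\<delta> \<le> (\<Sum>y\<in>UNIV. m y)" .
    have sm1: "(\<Sum>y\<in>UNIV. m y) \<le> 1" using sx(1) by (metis m_def min.cobounded1 sum_mono)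
    have "(\<Sum>y\<in>UNIV. r x y * g y) = (\<Sum>y\<in>UNIV. (r x y - m y) * g y) + (\<Sum>y\<in>UNIV. m y * g y)"
      by (simp add: left_diff_distrib sum_subtractf)
    also have "(\<Sum>y\<in>UNIV. (r x y - m y) * g y) \<le> (\<Sum>y\<in>UNIV. (r x y - m y) * Mx)"
      by (intro sum_mono mult_left_mono gM) (auto simp: m_def)
    also have "\<dots> = (1 - (\<Sum>y\<in>UNIV. m y)) * Mx" by (simp add: sum_distrib_right[symmetric] sum_subtractf sx)
    finally have A: "(\<Sum>y\<in>UNIV. r x y * g y) \<le> (1 - (\<Sum>y\<in>UNIV. m y)) * Mx + (\<Sum>y\<in>UNIV. m y * g y)" by simp
    have "(\<Sum>y\<in>UNIV. r x' y * g y) = (\<Sum>y\<in>UNIV. (r x' y - m y) * g y) + (\<Sum>y\<in>UNIV. m y * g y)"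
      by (simp add: left_diff_distrib sum_subtractf)
    moreover have "(\<Sum>y\<in>UNIV. (r x' y - m y) * Mn) \<le> (\<Sum>y\<in>UNIV. (r x' y - m y) * g y)"
      by (intro sum_mono mult_left_mono gM) (auto simp: m_def)
    moreover have "(\<Sum>y\<in>UNIV. (r x' y - m y) * Mn) = (1 - (\<Sum>y\<in>UNIV. m y)) * Mn"
      by (simp add: sum_distrib_right[symmetric] sum_subtractf sx)
    ultimately have B: "(1 - (\<Sum>y\<in>UNIV. m y)) * Mn + (\<Sum>y\<in>UNIV. m y * g y) \<le> (\<Sum>y\<in>UNIV. r x' y * g y)" by simp
    have "Mn \<le> Mx" using gM[of y0] by simp
    then have "(1 - (\<Sum>y\<in>UNIV. m y)) * (Mx - Mn) \<le> (1 - \<delta>) * (Mx - Mn)"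
      using sm by (intro mult_right_mono) auto
    with A B show ?thesis by (simp add: algebra_simps)
  qed
  define F where "F x = (\<Sum>y\<in>UNIV. r x y * g y)" for x
  have "Max (range F) \<in> range F" by (rule Max_in) auto
  then obtain x where x: "F x = Max (range F)" by (metis imageE)
  have "Min (range F) \<in> range F" by (rule Min_in) auto
  then obtain x' where x': "F x' = Min (range F)" by (metis imageE)
  have "osc F = F x - F x'" unfolding osc_def x x' by simp
  also have "\<dots> \<le> (1 - \<delta>) * osc g" using key[of x x'] unfolding F_def osc_def Mx_def Mn_def by simp
  finally show ?thesis unfolding F_def .
qed

definition lazy :: "('a \<Rightarrow> 'a \<Rightarrow> real) \<Rightarrow> 'a \<Rightarrow> 'a \<Rightarrow> real" where
  "lazy P x y = ((if x = y then 1 else 0) + P x y) / 2"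

context
  fixes P :: "'a::finite \<Rightarrow> 'a \<Rightarrow> real" and \<pi> :: "'a \<Rightarrow> real"
  assumes st: "stochastic_matrix P" and irr: "irreducible_chain P"
    and inv: "invariant_distribution P \<pi>"
begin

lemma P_nn: "P x y \<ge> 0" using st unfolding stochastic_matrix_def by auto

lemma lazy_nn: "lazy P x y \<ge> 0" unfolding lazy_def using P_nn[of x y] by auto

lemma lazy_stoch: "stochastic_matrix (lazy P)"
proof -
  have "(\<Sum>y\<in>UNIV. lazy P x y) = 1" for x
  proof -
    have "(\<Sum>y\<in>UNIV. lazy P x y) = ((\<Sum>y\<in>UNIV. if x = y then 1 else 0) + (\<Sum>y\<in>UNIV. P x y)) / 2"
      unfolding lazy_def by (simp only: sum_divide_distrib[symmetric] sum.distrib)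
    also have "\<dots> = 1" using st unfolding stochastic_matrix_def by simp
    finally show ?thesis .
  qed
  then show ?thesis using lazy_nn unfolding stochastic_matrix_def by auto
qed

lemma inv_eq: "(\<Sum>x\<in>UNIV. \<pi> x * P x y) = \<pi> y"
  using inv unfolding invariant_distribution_def by auto

lemma pi_pv: "prob_vector \<pi>" using inv unfolding invariant_distribution_def by auto

lemma lazy_inv: "(\<Sum>x\<in>UNIV. \<pi> x * lazy P x y) = \<pi> y"
proof -
  have "(\<Sum>x\<in>UNIV. \<pi> x * lazy P x y) = ((\<Sum>x\<in>UNIV. if x = y then \<pi> x else 0) + (\<Sum>x\<in>UNIV. \<pi> x * P x y)) / 2"
  proof -
    have "\<pi> x * lazy P x y = ((if x = y then \<pi> x else 0) + \<pi> x * P x y) / 2" for x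
      by (simp add: lazy_def field_simps)
    then show ?thesis by (simp only: sum_divide_distrib[symmetric] sum.distrib)
  qed
  also have "\<dots> = \<pi> y" using inv_eq by simp
  finally show ?thesis .
qed

lemma lazy_ge: "P x y / 2 \<le> lazy P x y" unfolding lazy_def by auto
lemma lazy_ge2: "P x y \<le> lazy P x y * 2" unfolding lazy_def by auto

lemma mpow_lazy_half: "mpow (lazy P) (Suc n) x y \<ge> mpow (lazy P) n x y / 2"
proof -
  have "mpow (lazy P) n x y / 2 \<le> mpow (lazy P) n x y * lazy P y y"
    using mpow_nonneg[of "lazy P", OF lazy_nn, of n x y] P_nn[of y y]
    unfolding lazy_def by (auto intro!: mult_left_mono simp: field_simps)
  also have "\<dots> \<le> (\<Sum>z\<in>UNIV. mpow (lazy P) n x z * lazy P z y)"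
    by (rule member_le_sum[where f="\<lambda>z. mpow (lazy P) n x z * lazy P z y"])
       (auto intro!: mult_nonneg_nonneg mpow_nonneg lazy_nn)
  finally show ?thesis by simp
qed

lemma mpow_lazy_P: "mpow (lazy P) n x y \<ge> (1/2)^n * mpow P n x y"
proof (induction n arbitrary: y)
  case 0 then show ?case by simp
next
  case (Suc n)
  have "(1/2)^Suc n * mpow P (Suc n) x y = (\<Sum>z\<in>UNIV. ((1/2)^n * mpow P n x z) * (P z y / 2))"
    by (simp add: sum_distrib_left mult_ac)
  also have "\<dots> \<le> (\<Sum>z\<in>UNIV. mpow (lazy P) n x z * lazy P z y)"
    using Suc by (intro sum_mono mult_mono) (auto simp: P_nn lazy_ge2 intro!: mpow_nonneg lazy_nn)
  finally show ?case by simp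
qed

lemma mpow_lazy_mono: "j \<le> m \<Longrightarrow> mpow (lazy P) m x y \<ge> (1/2)^(m-j) * mpow (lazy P) j x y"
proof (induction m rule: dec_induct)
  case base then show ?case by simp
next
  case (step m)
  have "(1/2)^(Suc m - j) * mpow (lazy P) j x y = ((1/2)^(m-j) * mpow (lazy P) j x y) / 2"
    using step.hyps by (simp add: Suc_diff_le)
  also have "\<dots> \<le> mpow (lazy P) m x y / 2" using step.IH by simp
  also have "\<dots> \<le> mpow (lazy P) (Suc m) x y" by (rule mpow_lazy_half)
  finally show ?case .
qed

lemma lazy_pos: "\<exists>d. \<forall>x y. mpow (lazy P) d x y > 0"
proof -
  have "\<forall>x y. \<exists>n. mpow P n x y > 0" using irr unfolding irreducible_chain_def by auto
  then obtain nn where nn: "\<And>x y. mpow P (nn x y) x y > 0" by metis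
  define d where "d = Max (range (\<lambda>(x, y). nn x y))"
  have le: "nn x y \<le> d" for x y unfolding d_def by (rule Max_ge) auto
  have "mpow (lazy P) d x y > 0" for x y
  proof -
    have "0 < (1/2)^(d - nn x y) * ((1/2)^(nn x y) * mpow P (nn x y) x y)"
      using nn[of x y] by simp
    also have "\<dots> \<le> (1/2)^(d - nn x y) * mpow (lazy P) (nn x y) x y"
      by (intro mult_left_mono mpow_lazy_P) auto
    also have "\<dots> \<le> mpow (lazy P) d x y" by (rule mpow_lazy_mono[OF le])
    finally show ?thesis .
  qed
  then show ?thesis by blast
qed

lemma pi_pos: "\<pi> y > 0"
proof -
  have s1: "(\<Sum>x\<in>UNIV. \<pi> x) = 1" and nn: "\<And>x. \<pi> x \<ge> 0" using pi_pv unfolding prob_vector_def by auto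
  have "\<exists>x0. \<pi> x0 > 0"
  proof (rule ccontr)
    assume "\<not> ?thesis"
    then have "\<forall>x. \<pi> x = 0" using nn by (metis antisym not_less)
    with s1 show False by simp
  qed
  then obtain x0 where x0: "\<pi> x0 > 0" by blast
  obtain n where n: "mpow P n x0 y > 0" using irr unfolding irreducible_chain_def by auto
  have "0 < \<pi> x0 * mpow P n x0 y" using x0 n by simp
  also have "\<dots> \<le> (\<Sum>x\<in>UNIV. \<pi> x * mpow P n x y)"
    by (rule member_le_sum[where f="\<lambda>x. \<pi> x * mpow P n x y"]) (auto intro!: mult_nonneg_nonneg nn mpow_nonneg P_nn)
  also have "\<dots> = \<pi> y" by (rule mpow_inv[OF inv_eq])
  finally show ?thesis .
qed

lemma poisson:
  assumes g0: "(\<Sum>x\<in>UNIV. \<pi> x * g x) = 0"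
  shows "\<exists>h. \<forall>x. h x - Pop P h x = g x"
proof -
  let ?Q = "lazy P"
  obtain d where dpos: "\<And>x y. mpow ?Q d x y > 0" using lazy_pos by blast
  define \<delta> where "\<delta> = Min (range (\<lambda>(x, y). mpow ?Q d x y))"
  have \<delta>le: "\<delta> \<le> mpow ?Q d x y" for x y unfolding \<delta>_def by (rule Min_le) auto
  have \<delta>pos: "\<delta> > 0"
  proof -
    have "\<delta> \<in> range (\<lambda>(x, y). mpow ?Q d x y)" unfolding \<delta>_def by (rule Min_in) auto
    then show ?thesis using dpos by auto
  qed
  obtain x1 :: 'a where True by simp
  have \<delta>1: "\<delta> \<le> 1"
  proof -
    have "\<delta> \<le> mpow ?Q d x1 x1" by (rule \<delta>le)
    also have "\<dots> \<le> (\<Sum>y\<in>UNIV. mpow ?Q d x1 y)"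
      by (rule member_le_sum[where f="\<lambda>y. mpow ?Q d x1 y"]) (auto intro!: mpow_nonneg lazy_nn)
    also have "\<dots> = 1" by (rule mpow_stoch[OF lazy_stoch])
    finally show ?thesis .
  qed
  have rst: "stochastic_matrix (mpow ?Q d)"
    unfolding stochastic_matrix_def using mpow_stoch[OF lazy_stoch] by (auto intro!: mpow_nonneg lazy_nn)
  define u where "u j = (Pop ?Q ^^ (d * j)) g" for j
  have uSuc: "u (Suc j) = (Pop ?Q ^^ d) (u j)" for j
    unfolding u_def by (simp add: funpow_add)
  have u0: "u 0 = g" unfolding u_def by simp
  have osc_u: "osc (u j) \<le> (1 - \<delta>)^j * osc g" for j
  proof (induction j)
    case 0 then show ?case by (simp add: u0)
  next
    case (Suc j)
    have "osc (u (Suc j)) = osc (\<lambda>x. \<Sum>y\<in>UNIV. mpow ?Q d x y * u j y)"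
    proof -
      have "(Pop ?Q ^^ d) (u j) = (\<lambda>x. \<Sum>y\<in>UNIV. mpow ?Q d x y * u j y)"
        by (rule ext) (rule Pop_funpow)
      then show ?thesis unfolding uSuc by simp
    qed
    also have "\<dots> \<le> (1 - \<delta>) * osc (u j)" by (rule doeblin[OF rst \<delta>le]) (use \<delta>pos in auto)
    also have "\<dots> \<le> (1 - \<delta>) * ((1 - \<delta>)^j * osc g)" using Suc \<delta>1 by (intro mult_left_mono) auto
    finally show ?case by simp
  qed
  have upi: "(\<Sum>x\<in>UNIV. \<pi> x * u j x) = 0" for j
    unfolding u_def using inv_Pop[OF lazy_inv] g0 by simp
  have ubound: "\<bar>u j x\<bar> \<le> (1 - \<delta>)^j * osc g" for j x
  proof -
    have s1: "(\<Sum>x\<in>UNIV. \<pi> x) = 1" and nn: "\<And>x. \<pi> x \<ge> 0" using pi_pv unfolding prob_vector_def by auto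
    let ?Mx = "Max (range (u j))" and ?Mn = "Min (range (u j))"
    have "?Mn = (\<Sum>x\<in>UNIV. \<pi> x * ?Mn)" using s1 by (simp add: sum_distrib_right[symmetric])
    also have "\<dots> \<le> (\<Sum>x\<in>UNIV. \<pi> x * u j x)" by (intro sum_mono mult_left_mono nn Min_le) auto
    finally have a: "?Mn \<le> 0" using upi by simp
    have "(\<Sum>x\<in>UNIV. \<pi> x * u j x) \<le> (\<Sum>x\<in>UNIV. \<pi> x * ?Mx)" by (intro sum_mono mult_left_mono nn Max_ge) auto
    also have "\<dots> = ?Mx" using s1 by (simp add: sum_distrib_right[symmetric])
    finally have b: "0 \<le> ?Mx" using upi by simp
    have c: "?Mn \<le> u j x" by (auto intro: Min_le)
    have d: "u j x \<le> ?Mx" by (auto intro: Max_ge)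
    have "\<bar>u j x\<bar> \<le> osc (u j)" unfolding osc_def using a b c d by linarith
    with osc_u[of j] show ?thesis by simp
  qed
  have summ: "summable (\<lambda>j. u j x)" for x
  proof (rule summable_comparison_test)
    show "\<exists>N. \<forall>n\<ge>N. norm (u n x) \<le> osc g * (1 - \<delta>)^n" using ubound by (auto simp: mult_ac)
    show "summable (\<lambda>n. osc g * (1 - \<delta>)^n)" using \<delta>pos \<delta>1 by (intro summable_mult summable_geometric) auto
  qed
  define hR where "hR x = (\<Sum>j. u j x)" for x
  have hR_eq: "(Pop ?Q ^^ d) hR x = hR x - g x" for x
  proof -
    have "(\<lambda>j. \<Sum>y\<in>UNIV. mpow ?Q d x y * u j y) sums (\<Sum>y\<in>UNIV. mpow ?Q d x y * hR y)"
      unfolding hR_def by (intro sums_sum sums_mult summable_sums summ)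
    then have "(\<lambda>j. u (Suc j) x) sums ((Pop ?Q ^^ d) hR x)"
      by (simp add: uSuc Pop_funpow)
    moreover have "(\<lambda>j. u (Suc j) x) sums (hR x - u 0 x)"
      using sums_Suc_iff[of "\<lambda>j. u j x"] summable_sums[OF summ[of x]] unfolding hR_def by simp
    ultimately show ?thesis using sums_unique2 u0 by metis
  qed
  define hQ where "hQ x = (\<Sum>r<d. (Pop ?Q ^^ r) hR x)" for x
  have "hQ x - Pop ?Q hQ x = g x" for x
  proof -
    have "Pop ?Q hQ x = (\<Sum>r<d. (Pop ?Q ^^ Suc r) hR x)"
      unfolding hQ_def by (simp add: Pop_sum)
    then have "hQ x - Pop ?Q hQ x = - (\<Sum>r<d. (Pop ?Q ^^ Suc r) hR x - (Pop ?Q ^^ r) hR x)"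
      unfolding hQ_def by (simp add: sum_subtractf)
    also have "\<dots> = hR x - (Pop ?Q ^^ d) hR x" by (subst sum_lessThan_telescope) simp
    also have "\<dots> = g x" using hR_eq by simp
    finally show ?thesis .
  qed
  moreover have "Pop ?Q hQ x = (hQ x + Pop P hQ x) / 2" for x
  proof -
    have "Pop ?Q hQ x = ((\<Sum>y\<in>UNIV. if x = y then hQ y else 0) + Pop P hQ x) / 2"
    proof -
      have "lazy P x y * hQ y = ((if x = y then hQ y else 0) + P x y * hQ y) / 2" for y
        by (simp add: lazy_def field_simps)
      then show ?thesis unfolding Pop_def by (simp only: sum_divide_distrib[symmetric] sum.distrib)
    qed
    then show ?thesis by simp
  qed
  ultimately have "hQ x / 2 - Pop P (\<lambda>y. hQ y / 2) x = g x" for x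
    using Pop_cmult[of P "1/2" hQ x] by (simp add: field_simps)
  then show ?thesis by (intro exI[of _ "\<lambda>y. hQ y / 2"]) auto
qed

end

lemma exp_quad_neg: "(t::real) \<le> 0 \<Longrightarrow> exp t \<le> 1 + t + t^2"
proof -
  assume t: "t \<le> 0"
  have a: "1 - t \<le> exp (-t)" using exp_ge_add_one_self[of "-t"] by simp
  have "exp t = 1 / exp (-t)" by (simp add: exp_minus field_simps)
  also have "\<dots> \<le> 1 / (1 - t)" using a t by (intro divide_left_mono) auto
  also have "\<dots> \<le> 1 + t + t^2"
  proof -
    have e: "(1 + t + t^2) * (1 - t) = 1 - t^3" by (simp add: algebra_simps power2_eq_square power3_eq_cube)
    have tt: "t * t \<ge> 0" by simp
    have "t^3 \<le> 0" using mult_nonneg_nonpos[OF tt t] by (simp add: power3_eq_cube)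
    then have "1 \<le> (1 + t + t^2) * (1 - t)" using e by simp
    then show ?thesis using t by (simp add: divide_le_eq)
  qed
  finally show ?thesis .
qed

lemma exp_quad: "\<bar>t::real\<bar> \<le> 1 \<Longrightarrow> exp t \<le> 1 + t + t^2"
  using exp_bound[of t] exp_quad_neg[of t] by (cases "t \<ge> 0") auto

lemma fld_aux: "(K::real) > 0 \<Longrightarrow> (K/2) * (y/K)^2 - (y/K)*y = - (y^2) / (2*K)"
  by (simp add: field_simps power2_eq_square)

lemma fld_aux2: "(L::real) > 0 \<Longrightarrow> c \<ge> 1 \<Longrightarrow> l = y / (2 * L * c^2) \<Longrightarrow> L * l^2 * c^2 - l * y = - (y^2) / (4 * L * c^2)"
proof -
  assume L: "L > 0" and c: "c \<ge> 1" and l: "l = y / (2 * L * c^2)"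
  define K where "K = 2 * L * c^2"
  have K: "K > 0" unfolding K_def using L c by simp
  have "L * l^2 * c^2 - l * y = (K/2) * (y/K)^2 - (y/K)*y" unfolding l K_def by (simp add: mult_ac)
  also have "\<dots> = - (y^2) / (2*K)" by (rule fld_aux[OF K])
  also have "\<dots> = - (y^2) / (4 * L * c^2)" unfolding K_def by simp
  finally show ?thesis .
qed

lemma hoeff_lite:
  fixes q z :: "'a::finite \<Rightarrow> real"
  assumes q0: "\<And>y. q y \<ge> 0" and q1: "(\<Sum>y\<in>UNIV. q y) = 1" and z0: "(\<Sum>y\<in>UNIV. q y * z y) = 0"
    and zc: "\<And>y. \<bar>z y\<bar> \<le> c" and l0: "l \<ge> 0" and lc: "l * c \<le> 1"
  shows "(\<Sum>y\<in>UNIV. q y * exp (l * z y)) \<le> exp (l^2 * c^2)"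
proof -
  have "(\<Sum>y\<in>UNIV. q y * exp (l * z y)) \<le> (\<Sum>y\<in>UNIV. q y * (1 + l * z y + l^2 * c^2))"
  proof (intro sum_mono mult_left_mono q0)
    fix y
    have "\<bar>l * z y\<bar> \<le> l * c" using zc[of y] l0 by (simp add: abs_mult mult_left_mono)
    then have "\<bar>l * z y\<bar> \<le> 1" using lc by simp
    then have "exp (l * z y) \<le> 1 + l * z y + (l * z y)^2" by (rule exp_quad)
    also have "(l * z y)^2 \<le> l^2 * c^2"
      using zc[of y] l0 by (simp add: power_mult_distrib abs_le_square_iff[symmetric] mult_left_mono)
    finally show "exp (l * z y) \<le> 1 + l * z y + l^2 * c^2" by simp
  qed
  also have "\<dots> = 1 + l^2 * c^2"
    using q1 z0 by (simp add: distrib_left sum.distrib sum_distrib_left[symmetric] sum_distrib_right[symmetric] mult_ac)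
  also have "\<dots> \<le> exp (l^2 * c^2)" by (rule exp_ge_add_one_self)
  finally show ?thesis .
qed

definition nrm :: "('a::finite \<Rightarrow> real) \<Rightarrow> real" where
  "nrm h = Max (range (\<lambda>x. \<bar>h x\<bar>))"

lemma nrm_ge: "\<bar>h x\<bar> \<le> nrm h"
  unfolding nrm_def by (rule Max_ge) auto

lemma nrm_nonneg: "nrm h \<ge> 0"
  using nrm_ge[of h undefined] by linarith

context mchain
begin

lemma Pop_bound: "\<bar>Pop P h x\<bar> \<le> nrm h"
proof -
  have "\<bar>Pop P h x\<bar> \<le> (\<Sum>y\<in>UNIV. P x y * nrm h)"
    unfolding Pop_def
    by (rule order_trans[OF sum_abs]) (auto intro!: sum_mono simp: abs_mult P_nonneg mult_left_mono nrm_ge)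
  also have "\<dots> = nrm h" using P_sum by (simp add: sum_distrib_right[symmetric])
  finally show ?thesis .
qed

definition Dm :: "('a \<Rightarrow> real) \<Rightarrow> nat \<Rightarrow> (nat \<Rightarrow> 'a) \<Rightarrow> real" where
  "Dm h t x = h (x (Suc t)) - Pop P h (x t)"

lemma Dm_bound: "\<bar>Dm h t x\<bar> \<le> 2 * nrm h"
  unfolding Dm_def using nrm_ge[of h "x (Suc t)"] Pop_bound[of h "x t"] by linarith

lemma exp_moment:
  assumes a1: "1 \<le> a" and ab: "a \<le> b" and bm: "b \<le> m" and l0: "l \<ge> 0"
    and lc: "l * (2 * nrm h + 1) \<le> 1"
  shows "E m (\<lambda>x. exp (l * (\<Sum>t\<in>{a..<b}. Dm h t x))) \<le> exp (l^2 * (2 * nrm h + 1)^2) ^ (b - a)"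
  using ab bm
proof (induction b rule: dec_induct)
  case base
  then show ?case using a1 by (simp add: E_const)
next
  case (step b)
  let ?c = "2 * nrm h + 1"
  define F where "F x = exp (l * (\<Sum>t\<in>{a..<b}. Dm h t x))" for x
  have Fd: "dep b F"
    unfolding dep_def F_def Dm_def
  proof (intro allI impI)
    fix x x' :: "nat \<Rightarrow> 'a" assume h: "\<forall>i\<in>{1..b}. x i = x' i"
    have "(\<Sum>t\<in>{a..<b}. h (x (Suc t)) - Pop P h (x t)) = (\<Sum>t\<in>{a..<b}. h (x' (Suc t)) - Pop P h (x' t))"
      using h a1 by (intro sum.cong) auto
    then show "exp (l * (\<Sum>t\<in>{a..<b}. h (x (Suc t)) - Pop P h (x t))) = exp (l * (\<Sum>t\<in>{a..<b}. h (x' (Suc t)) - Pop P h (x' t)))"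
      by simp
  qed
  have "E m (\<lambda>x. exp (l * (\<Sum>t\<in>{a..<Suc b}. Dm h t x)))
      = E m (\<lambda>x. F x * exp (l * (h (x (Suc b)) - Pop P h (x b))))"
    using step.hyps by (simp add: F_def Dm_def distrib_left exp_add)
  also have "\<dots> = E m (\<lambda>x. F x * (\<Sum>y\<in>UNIV. P (x b) y * exp (l * (h y - Pop P h (x b)))))"
    using E_step[where \<phi>="\<lambda>u v. exp (l * (h v - Pop P h u))", of b m F] step.hyps step.prems a1 Fd by simp
  also have "\<dots> \<le> E m (\<lambda>x. F x * exp (l^2 * ?c^2))"
  proof (intro E_mono mult_left_mono)
    fix x
    show "0 \<le> F x" unfolding F_def by simp
    show "(\<Sum>y\<in>UNIV. P (x b) y * exp (l * (h y - Pop P h (x b)))) \<le> exp (l^2 * ?c^2)"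
    proof (rule hoeff_lite[OF P_nonneg P_sum _ _ l0 lc])
      show "(\<Sum>y\<in>UNIV. P (x b) y * (h y - Pop P h (x b))) = 0"
        using P_sum by (simp add: right_diff_distrib sum_subtractf Pop_def sum_distrib_right[symmetric])
      show "\<bar>h y - Pop P h (x b)\<bar> \<le> ?c" for y
        using nrm_ge[of h y] Pop_bound[of h "x b"] abs_triangle_ineq4[of "h y" "Pop P h (x b)"] by linarith
    qed
  qed
  also have "\<dots> = exp (l^2 * ?c^2) * E m F" by (simp only: E_cmult_right mult.commute)
  also have "\<dots> \<le> exp (l^2 * ?c^2) * exp (l^2 * ?c^2) ^ (b - a)"
  proof (intro mult_left_mono)
    have "E m F = E m (\<lambda>x. exp (l * (\<Sum>t\<in>{a..<b}. Dm h t x)))"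
      by (rule arg_cong[where f="E m"]) (simp add: fun_eq_iff F_def)
    also have "\<dots> \<le> exp (l^2 * ?c^2) ^ (b - a)" using step.IH step.prems by simp
    finally show "E m F \<le> exp (l^2 * ?c^2) ^ (b - a)" .
  qed simp
  also have "\<dots> = exp (l^2 * ?c^2) ^ (Suc b - a)"
    using step.hyps by (simp add: Suc_diff_le)
  finally show ?case .
qed


lemma E_zero: "E m (\<lambda>_. 0) = 0" unfolding pathE_def by simp

lemma dev_D:
  assumes a1: "1 \<le> a" and ab: "a \<le> b" and bm: "b \<le> m" and y: "y > 0"
  shows "E m (\<lambda>x. of_bool (y \<le> (\<Sum>t\<in>{a..<b}. Dm h t x)))
          \<le> exp (- (y^2) / (4 * real (b - a) * (2 * nrm h + 1)^2))"
proof -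
  define c where "c = 2 * nrm h + 1"
  have c1: "c \<ge> 1" unfolding c_def using nrm_nonneg[of h] by simp
  define L where "L = real (b - a)"
  have sb: "(\<Sum>t\<in>{a..<b}. Dm h t x) \<le> L * (2 * nrm h)" for x
  proof -
    have "(\<Sum>t\<in>{a..<b}. Dm h t x) \<le> (\<Sum>t\<in>{a..<b}. 2 * nrm h)"
      by (intro sum_mono) (use Dm_bound[of h] in \<open>auto simp: abs_le_iff\<close>)
    then show ?thesis unfolding L_def by simp
  qed
  show ?thesis
  proof (cases "y \<le> 2 * L * c")
    case False
    have "E m (\<lambda>x. of_bool (y \<le> (\<Sum>t\<in>{a..<b}. Dm h t x))) = E m (\<lambda>_. 0)"
    proof (rule arg_cong[where f="E m"], rule ext)
      fix x
      have "L * (2 * nrm h) \<le> 2 * L * c" unfolding c_def L_def using nrm_nonneg[of h] by (simp add: algebra_simps)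
      then show "of_bool (y \<le> (\<Sum>t\<in>{a..<b}. Dm h t x)) = (0::real)" using sb[of x] False by auto
    qed
    then show ?thesis by (simp add: E_zero)
  next
    case True
    then have "0 < 2 * L * c" using y by linarith
    then have L0: "L > 0" using c1 by (simp add: zero_less_mult_iff)
    define l where "l = y / (2 * L * c^2)"
    have l0: "l \<ge> 0" unfolding l_def using y L0 by simp
    have lc: "l * c \<le> 1"
    proof -
      have "l * c = y / (2 * L * c)" unfolding l_def using c1 by (simp add: power2_eq_square)
      also have "\<dots> \<le> 1" using True L0 c1 by (simp add: divide_le_eq)
      finally show ?thesis .
    qed
    have "E m (\<lambda>x. of_bool (y \<le> (\<Sum>t\<in>{a..<b}. Dm h t x)))
        \<le> E m (\<lambda>x. exp (l * (\<Sum>t\<in>{a..<b}. Dm h t x)) * exp (- l * y))"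
    proof (rule E_mono)
      fix x
      show "of_bool (y \<le> (\<Sum>t\<in>{a..<b}. Dm h t x)) \<le> exp (l * (\<Sum>t\<in>{a..<b}. Dm h t x)) * exp (- l * y)"
      proof (cases "y \<le> (\<Sum>t\<in>{a..<b}. Dm h t x)")
        case True
        then have "0 \<le> l * (\<Sum>t\<in>{a..<b}. Dm h t x) + - l * y" using l0 by (simp add: algebra_simps mult_left_mono)
        then have "1 \<le> exp (l * (\<Sum>t\<in>{a..<b}. Dm h t x) + - l * y)" by simp
        also have "\<dots> = exp (l * (\<Sum>t\<in>{a..<b}. Dm h t x)) * exp (- l * y)" by (rule exp_add)
        finally show ?thesis using True by simp
      qed simp
    qed
    also have "\<dots> = E m (\<lambda>x. exp (l * (\<Sum>t\<in>{a..<b}. Dm h t x))) * exp (- l * y)"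
      by (rule E_cmult_right)
    also have "\<dots> \<le> exp (l^2 * c^2) ^ (b - a) * exp (- l * y)"
      using exp_moment[OF a1 ab bm l0] lc unfolding c_def by (intro mult_right_mono) auto
    also have "\<dots> = exp (L * l^2 * c^2 - l * y)"
    proof -
      have "exp (l^2 * c^2) ^ (b - a) = exp (L * (l^2 * c^2))" unfolding L_def by (rule exp_of_nat_mult[symmetric])
      then show ?thesis by (simp add: exp_add[symmetric] exp_diff mult_ac exp_minus field_simps)
    qed
    also have "L * l^2 * c^2 - l * y = - (y^2) / (4 * L * c^2)"
      by (rule fld_aux2[OF L0 c1 l_def])
    finally show ?thesis unfolding c_def L_def .
  qed
qed

lemma Pop_uminus: "Pop A (\<lambda>z. - h z) x = - Pop A h x"
  unfolding Pop_def by (simp add: sum_negf)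

lemma nrm_uminus: "nrm (\<lambda>z. - h z) = nrm h"
  unfolding nrm_def by simp

lemma dev_g:
  assumes pois: "\<And>x. h x - Pop P h x = g x"
    and a1: "1 \<le> a" and ab: "a \<le> b" and bm: "b \<le> m" and y: "y > 0"
  shows "E m (\<lambda>x. of_bool (y + 2 * nrm h \<le> \<bar>\<Sum>t\<in>{a..<b}. g (x t)\<bar>))
          \<le> 2 * exp (- (y^2) / (4 * real (b - a) * (2 * nrm h + 1)^2))"
proof -
  let ?B = "exp (- (y^2) / (4 * real (b - a) * (2 * nrm h + 1)^2))"
  have decomp: "(\<Sum>t\<in>{a..<b}. g (x t)) = (\<Sum>t\<in>{a..<b}. Dm h t x) + h (x a) - h (x b)" for x
  proof -
    have "(\<Sum>t\<in>{a..<b}. g (x t)) = (\<Sum>t\<in>{a..<b}. Dm h t x + (h (x t) - h (x (Suc t))))"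
      by (intro sum.cong) (auto simp: Dm_def pois[symmetric])
    also have "\<dots> = (\<Sum>t\<in>{a..<b}. Dm h t x) - (\<Sum>t\<in>{a..<b}. h (x (Suc t)) - h (x t))"
      by (simp add: sum.distrib sum_subtractf)
    also have "(\<Sum>t\<in>{a..<b}. h (x (Suc t)) - h (x t)) = h (x b) - h (x a)"
      using sum_Suc_diff'[OF ab, of "\<lambda>t. h (x t)"] by simp
    finally show ?thesis by simp
  qed
  have Dneg: "Dm (\<lambda>z. - h z) t x = - Dm h t x" for t x
    unfolding Dm_def by (simp add: Pop_uminus)
  have pt: "of_bool (y + 2 * nrm h \<le> \<bar>\<Sum>t\<in>{a..<b}. g (x t)\<bar>)
      \<le> (of_bool (y \<le> (\<Sum>t\<in>{a..<b}. Dm h t x)) + of_bool (y \<le> (\<Sum>t\<in>{a..<b}. Dm (\<lambda>z. - h z) t x)) :: real)" for x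
  proof -
    have key: "of_bool (y + 2 * nrm h \<le> \<bar>S + d\<bar>) \<le> (of_bool (y \<le> S) + of_bool (y \<le> - S) :: real)"
      if dd: "\<bar>d\<bar> \<le> 2 * nrm h" for S d
    proof (cases "y + 2 * nrm h \<le> \<bar>S + d\<bar>")
      case True
      have "y \<le> S \<or> y \<le> - S"
      proof (cases "S + d \<ge> 0")
        case True2: True
        then have "y + 2 * nrm h \<le> S + d" using True by simp
        then show ?thesis using dd by (auto simp: abs_le_iff)
      next
        case False
        then have "y + 2 * nrm h \<le> - (S + d)" using True by simp
        then show ?thesis using dd by (auto simp: abs_le_iff)
      qed
      then show ?thesis by auto
    qed simp
    have dd: "\<bar>h (x a) - h (x b)\<bar> \<le> 2 * nrm h"
      using nrm_ge[of h "x a"] nrm_ge[of h "x b"] abs_triangle_ineq4[of "h (x a)" "h (x b)"] by linarith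
    have g: "(\<Sum>t\<in>{a..<b}. g (x t)) = (\<Sum>t\<in>{a..<b}. Dm h t x) + (h (x a) - h (x b))"
      unfolding decomp by simp
    have n: "(\<Sum>t\<in>{a..<b}. Dm (\<lambda>z. - h z) t x) = - (\<Sum>t\<in>{a..<b}. Dm h t x)"
      unfolding Dneg sum_negf by simp
    show ?thesis unfolding g n by (rule key[OF dd])
  qed
  have "E m (\<lambda>x. of_bool (y + 2 * nrm h \<le> \<bar>\<Sum>t\<in>{a..<b}. g (x t)\<bar>))
      \<le> E m (\<lambda>x. of_bool (y \<le> (\<Sum>t\<in>{a..<b}. Dm h t x)) + of_bool (y \<le> (\<Sum>t\<in>{a..<b}. Dm (\<lambda>z. - h z) t x)))"
    by (rule E_mono[OF pt])
  also have "\<dots> \<le> ?B + ?B"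
    unfolding E_add using dev_D[OF a1 ab bm y, of h] dev_D[OF a1 ab bm y, of "\<lambda>z. - h z"]
    by (simp add: nrm_uminus)
  finally show ?thesis by simp
qed

end

definition bdd_rv :: "'b measure \<Rightarrow> ('b \<Rightarrow> real) \<Rightarrow> bool" where
  "bdd_rv M A \<longleftrightarrow> A \<in> borel_measurable M \<and> (\<exists>K. \<forall>\<omega>\<in>space M. \<bar>A \<omega>\<bar> \<le> K)"

context prob_space
begin

lemma bdd_integrable: "bdd_rv M A \<Longrightarrow> integrable M A"
  unfolding bdd_rv_def
proof (elim conjE exE)
  fix K assume m: "A \<in> borel_measurable M" and K: "\<forall>\<omega>\<in>space M. \<bar>A \<omega>\<bar> \<le> K"
  show "integrable M A" by (rule integrable_const_bound[where B=K]) (use m K in \<open>auto intro!: AE_I2\<close>)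
qed

lemma bdd_add: "bdd_rv M A \<Longrightarrow> bdd_rv M B \<Longrightarrow> bdd_rv M (\<lambda>\<omega>. A \<omega> + B \<omega>)"
  unfolding bdd_rv_def
proof (elim conjE exE, intro conjI)
  fix K1 K2 assume "\<forall>\<omega>\<in>space M. \<bar>A \<omega>\<bar> \<le> K1" "\<forall>\<omega>\<in>space M. \<bar>B \<omega>\<bar> \<le> K2"
  then show "\<exists>K. \<forall>\<omega>\<in>space M. \<bar>A \<omega> + B \<omega>\<bar> \<le> K"
    by (intro exI[of _ "K1 + K2"]) (auto intro: order_trans[OF abs_triangle_ineq] add_mono)
qed auto

lemma bdd_mult: "bdd_rv M A \<Longrightarrow> bdd_rv M B \<Longrightarrow> bdd_rv M (\<lambda>\<omega>. A \<omega> * B \<omega>)"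
  unfolding bdd_rv_def
proof (elim conjE exE, intro conjI)
  fix K1 K2 assume a: "\<forall>\<omega>\<in>space M. \<bar>A \<omega>\<bar> \<le> K1" and b: "\<forall>\<omega>\<in>space M. \<bar>B \<omega>\<bar> \<le> K2"
  show "\<exists>K. \<forall>\<omega>\<in>space M. \<bar>A \<omega> * B \<omega>\<bar> \<le> K"
  proof (intro exI[of _ "K1 * K2"] ballI)
    fix \<omega> assume "\<omega> \<in> space M"
    then have "\<bar>A \<omega>\<bar> \<le> K1" "\<bar>B \<omega>\<bar> \<le> K2" using a b by auto
    then show "\<bar>A \<omega> * B \<omega>\<bar> \<le> K1 * K2" unfolding abs_mult by (intro mult_mono) auto
  qed
qed auto

lemma bdd_const: "bdd_rv M (\<lambda>_. c)"
  unfolding bdd_rv_def by auto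

lemma bdd_cmult: "bdd_rv M A \<Longrightarrow> bdd_rv M (\<lambda>\<omega>. c * A \<omega>)"
  using bdd_mult[OF bdd_const] by blast

lemma bdd_diff: "bdd_rv M A \<Longrightarrow> bdd_rv M B \<Longrightarrow> bdd_rv M (\<lambda>\<omega>. A \<omega> - B \<omega>)"
  using bdd_add[of A "\<lambda>\<omega>. (-1) * B \<omega>"] bdd_cmult[of B "-1"] by simp

lemma cs_ineq:
  assumes A: "bdd_rv M A" and B: "bdd_rv M B"
  shows "\<bar>expectation (\<lambda>\<omega>. A \<omega> * B \<omega>)\<bar> \<le> sqrt (expectation (\<lambda>\<omega>. (A \<omega>)^2) * expectation (\<lambda>\<omega>. (B \<omega>)^2))"
proof -
  define a where "a = expectation (\<lambda>\<omega>. (A \<omega>)^2)"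
  define b where "b = expectation (\<lambda>\<omega>. (B \<omega>)^2)"
  define c where "c = expectation (\<lambda>\<omega>. A \<omega> * B \<omega>)"
  have iA: "integrable M (\<lambda>\<omega>. (A \<omega>)^2)" using bdd_mult[OF A A] by (simp add: power2_eq_square bdd_integrable)
  have iB: "integrable M (\<lambda>\<omega>. (B \<omega>)^2)" using bdd_mult[OF B B] by (simp add: power2_eq_square bdd_integrable)
  have iAB: "integrable M (\<lambda>\<omega>. A \<omega> * B \<omega>)" using bdd_mult[OF A B] by (simp add: bdd_integrable)
  have quad: "0 \<le> s^2 * a - 2 * s * c + b" for s
  proof -
    have "0 \<le> expectation (\<lambda>\<omega>. (s * A \<omega> - B \<omega>)^2)" by simp
    also have "(\<lambda>\<omega>. (s * A \<omega> - B \<omega>)^2) = (\<lambda>\<omega>. s^2 * (A \<omega>)^2 - 2 * s * (A \<omega> * B \<omega>) + (B \<omega>)^2)"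
      by (auto simp: power2_eq_square algebra_simps)
    also have "expectation \<dots> = s^2 * a - 2 * s * c + b"
      unfolding a_def b_def c_def using iA iB iAB
      by (simp add: Bochner_Integration.integral_add Bochner_Integration.integral_diff)
    finally show ?thesis .
  qed
  have a0: "a \<ge> 0" "b \<ge> 0" unfolding a_def b_def by auto
  have "c^2 \<le> a * b"
  proof (cases "a = 0")
    case True
    have "c = 0"
    proof (rule ccontr)
      assume "c \<noteq> 0"
      then have "0 \<le> - 2 * ((b + 1) / (2 * c)) * c + b" using quad[of "(b + 1) / (2 * c)"] True by simp
      also have "\<dots> = -1" using \<open>c \<noteq> 0\<close> by (simp add: field_simps)
      finally show False by simp
    qed
    then show ?thesis using True by simp
  next
    case False
    then have ap: "a > 0" using a0 by simp
    have "0 \<le> (c / a)^2 * a - 2 * (c / a) * c + b" by (rule quad)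
    also have "\<dots> = b - c^2 / a" using ap by (simp add: field_simps power2_eq_square)
    finally show ?thesis using ap by (simp add: field_simps)
  qed
  then have "sqrt (c^2) \<le> sqrt (a * b)" by (rule real_sqrt_le_mono)
  then show ?thesis unfolding a_def b_def c_def by simp
qed

lemma var_alt:
  assumes A: "bdd_rv M A"
  shows "variance A = expectation (\<lambda>\<omega>. (A \<omega>)^2) - (expectation A)^2"
proof -
  have iA: "integrable M (\<lambda>\<omega>. (A \<omega>)^2)" using bdd_mult[OF A A] by (simp add: power2_eq_square bdd_integrable)
  have iA1: "integrable M A" using A by (rule bdd_integrable)
  have "variance A = expectation (\<lambda>\<omega>. (A \<omega>)^2 - 2 * expectation A * A \<omega> + (expectation A)^2)"
    by (simp add: power2_eq_square algebra_simps)
  also have "\<dots> = expectation (\<lambda>\<omega>. (A \<omega>)^2) - 2 * expectation A * expectation A + (expectation A)^2"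
    using iA iA1 by (simp add: Bochner_Integration.integral_add Bochner_Integration.integral_diff prob_space)
  finally show ?thesis by (simp add: power2_eq_square)
qed

lemma var_le_sq:
  assumes A: "bdd_rv M A"
  shows "variance A \<le> expectation (\<lambda>\<omega>. (A \<omega>)^2)"
  using var_alt[OF A] by simp

lemma var_perturb:
  assumes A: "bdd_rv M A" and B: "bdd_rv M B"
  shows "\<bar>variance A - variance B\<bar> \<le> variance (\<lambda>\<omega>. A \<omega> - B \<omega>) + 2 * sqrt (variance B * variance (\<lambda>\<omega>. A \<omega> - B \<omega>))"
proof -
  define b where "b \<omega> = B \<omega> - expectation B" for \<omega>
  define c where "c \<omega> = (A \<omega> - B \<omega>) - expectation (\<lambda>\<omega>. A \<omega> - B \<omega>)" for \<omega>
  have bb: "bdd_rv M b" unfolding b_def by (intro bdd_diff B bdd_const)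
  have cb: "bdd_rv M c" unfolding c_def by (intro bdd_diff A B bdd_const)
  have EAB: "expectation (\<lambda>\<omega>. A \<omega> - B \<omega>) = expectation A - expectation B"
    using A B by (simp add: bdd_integrable Bochner_Integration.integral_diff)
  have VA: "variance A = expectation (\<lambda>\<omega>. (b \<omega>)^2 + 2 * (b \<omega> * c \<omega>) + (c \<omega>)^2)"
    unfolding b_def c_def EAB by (intro arg_cong[where f=expectation] ext) (simp add: power2_eq_square algebra_simps)
  have ib: "integrable M (\<lambda>\<omega>. (b \<omega>)^2)" using bdd_mult[OF bb bb] by (simp add: power2_eq_square bdd_integrable)
  have ic: "integrable M (\<lambda>\<omega>. (c \<omega>)^2)" using bdd_mult[OF cb cb] by (simp add: power2_eq_square bdd_integrable)
  have ibc: "integrable M (\<lambda>\<omega>. b \<omega> * c \<omega>)" using bdd_mult[OF bb cb] by (simp add: bdd_integrable)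
  have VA2: "variance A = variance B + 2 * expectation (\<lambda>\<omega>. b \<omega> * c \<omega>) + variance (\<lambda>\<omega>. A \<omega> - B \<omega>)"
    unfolding VA using ib ic ibc
    by (simp add: Bochner_Integration.integral_add b_def c_def)
  have "\<bar>expectation (\<lambda>\<omega>. b \<omega> * c \<omega>)\<bar> \<le> sqrt (variance B * variance (\<lambda>\<omega>. A \<omega> - B \<omega>))"
    using cs_ineq[OF bb cb] unfolding b_def c_def by simp
  moreover have vc: "variance (\<lambda>\<omega>. A \<omega> - B \<omega>) \<ge> 0" by (rule integral_nonneg_AE) auto
  ultimately show ?thesis unfolding VA2 abs_le_iff by (intro conjI; linarith)
qed

end

lemma nrm_diff: "\<bar>h a - h b\<bar> \<le> 2 * nrm h"
  using nrm_ge[of h a] nrm_ge[of h b] abs_triangle_ineq4[of "h a" "h b"] by linarith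

lemma nrm_diff1: "h a - h b \<le> 2 * nrm h" "h b - h a \<le> 2 * nrm h"
  using nrm_diff[of h a b] by (auto simp: abs_le_iff)

context mchain
begin

lemma E_depfun_bdd:
  fixes G :: "(nat \<Rightarrow> 'a) \<Rightarrow> real"
  assumes m: "m \<ge> 1" and G: "dep m G"
  shows "bdd_rv M (\<lambda>\<omega>. G (\<lambda>i. X i \<omega>))"
  unfolding bdd_rv_def
proof
  show "(\<lambda>\<omega>. G (\<lambda>i. X i \<omega>)) \<in> borel_measurable M"
    using E_integrable[OF m G] by (rule borel_measurable_integrable)
  show "\<exists>K. \<forall>\<omega>\<in>space M. \<bar>G (\<lambda>i. X i \<omega>)\<bar> \<le> K"
  proof (intro exI ballI)
    fix \<omega>
    define x0 where "x0 = restrict (\<lambda>i. X i \<omega>) {1..m}"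
    have x0p: "x0 \<in> paths m" unfolding paths_def x0_def by auto
    have "G (\<lambda>i. X i \<omega>) = G x0" using G unfolding dep_def x0_def by auto
    then show "\<bar>G (\<lambda>i. X i \<omega>)\<bar> \<le> Max ((\<lambda>x. \<bar>G x\<bar>) ` paths m)"
      using x0p by (auto intro!: Max_ge)
  qed
qed

lemma var_E:
  fixes G :: "(nat \<Rightarrow> 'a) \<Rightarrow> real"
  assumes m: "m \<ge> 1" and G: "dep m G"
  shows "prob_space.variance M (\<lambda>\<omega>. G (\<lambda>i. X i \<omega>)) = E m (\<lambda>x. (G x)^2) - (E m G)^2"
proof -
  interpret prob_space M by (rule ps)
  have G2: "dep m (\<lambda>x. (G x)^2)" using G unfolding dep_def by metis
  have "variance (\<lambda>\<omega>. G (\<lambda>i. X i \<omega>)) = expectation (\<lambda>\<omega>. (G (\<lambda>i. X i \<omega>))^2) - (expectation (\<lambda>\<omega>. G (\<lambda>i. X i \<omega>)))^2"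
    by (rule var_alt[OF E_depfun_bdd[OF m G]])
  also have "\<dots> = E m (\<lambda>x. (G x)^2) - (E m G)^2"
    using E_expectation[OF m G] E_expectation[OF m G2] by simp
  finally show ?thesis .
qed

lemma decomp:
  assumes pois: "\<And>u. h u - Pop P h u = g u" and ab: "a \<le> b"
  shows "(\<Sum>t\<in>{a..<b}. g (x t)) = (\<Sum>t\<in>{a..<b}. Dm h t x) + h (x a) - h (x b)"
proof -
  have "(\<Sum>t\<in>{a..<b}. g (x t)) = (\<Sum>t\<in>{a..<b}. Dm h t x + (h (x t) - h (x (Suc t))))"
    by (intro sum.cong) (auto simp: Dm_def pois[symmetric])
  also have "\<dots> = (\<Sum>t\<in>{a..<b}. Dm h t x) - (\<Sum>t\<in>{a..<b}. h (x (Suc t)) - h (x t))"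
    by (simp add: sum.distrib sum_subtractf)
  also have "(\<Sum>t\<in>{a..<b}. h (x (Suc t)) - h (x t)) = h (x b) - h (x a)"
    using sum_Suc_diff'[OF ab, of "\<lambda>t. h (x t)"] by simp
  finally show ?thesis by simp
qed

lemma Pcentered: "(\<Sum>y\<in>UNIV. P u y * (h y - Pop P h u)) = 0"
  using P_sum[of u] by (simp add: right_diff_distrib sum_subtractf Pop_def sum_distrib_right[symmetric])

lemma E_markov1:
  assumes "1 \<le> t" "t < m"
  shows "E m (\<lambda>x. \<phi> (x (Suc t))) = E m (\<lambda>x. Pop P \<phi> (x t))"
  using E_step[of t m "\<lambda>_. 1" "\<lambda>u v. \<phi> v"] assms by (simp add: dep_def Pop_def)

lemma E_Dm: "1 \<le> t \<Longrightarrow> t < m \<Longrightarrow> E m (Dm h t) = 0"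
  using E_step[of t m "\<lambda>_. 1" "\<lambda>u v. h v - Pop P h u"]
  by (simp add: dep_def Dm_def[abs_def] Pcentered E_zero)

definition vfun :: "('a \<Rightarrow> real) \<Rightarrow> 'a \<Rightarrow> real" where
  "vfun h u = (\<Sum>y\<in>UNIV. P u y * (h y - Pop P h u)^2)"

definition Mt :: "('a \<Rightarrow> real) \<Rightarrow> nat \<Rightarrow> (nat \<Rightarrow> 'a) \<Rightarrow> real" where
  "Mt h n x = (\<Sum>t\<in>{1..n}. Dm h t x)"

lemma dep_Mt: "dep (Suc n) (Mt h n)"
  unfolding dep_def Mt_def Dm_def by (auto intro!: sum.cong)

lemma E_Mt: "Suc n \<le> m \<Longrightarrow> E m (Mt h n) = 0"
  unfolding Mt_def E_sum by (intro sum.neutral) (auto intro!: E_Dm)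

lemma E_Mt2: "Suc n \<le> m \<Longrightarrow> E m (\<lambda>x. (Mt h n x)^2) = (\<Sum>t\<in>{1..n}. E m (\<lambda>x. vfun h (x t)))"
proof (induction n)
  case 0 then show ?case by (simp add: Mt_def E_zero)
next
  case (Suc n)
  have sq: "(Mt h (Suc n) x)^2 = (Mt h n x)^2 + (2 * Mt h n x) * Dm h (Suc n) x + 1 * (Dm h (Suc n) x)^2" for x
    by (simp add: Mt_def power2_eq_square algebra_simps)
  have d2: "dep (Suc n) (\<lambda>x. 2 * Mt h n x)" using dep_Mt[of n h] unfolding dep_def by metis
  have "E m (\<lambda>x. (2 * Mt h n x) * Dm h (Suc n) x) = E m (\<lambda>x. (2 * Mt h n x) * (\<Sum>y\<in>UNIV. P (x (Suc n)) y * (h y - Pop P h (x (Suc n)))))"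
    using E_step[of "Suc n" m "\<lambda>x. 2 * Mt h n x" "\<lambda>u v. h v - Pop P h u"] Suc.prems d2
    by (simp add: Dm_def)
  also have "\<dots> = 0" by (simp add: Pcentered E_zero)
  finally have c: "E m (\<lambda>x. (2 * Mt h n x) * Dm h (Suc n) x) = 0" .
  have "E m (\<lambda>x. 1 * (Dm h (Suc n) x)^2) = E m (\<lambda>x. 1 * vfun h (x (Suc n)))"
    using E_step[of "Suc n" m "\<lambda>_. 1" "\<lambda>u v. (h v - Pop P h u)^2"] Suc.prems
    by (simp add: Dm_def vfun_def dep_def)
  then have d: "E m (\<lambda>x. (Dm h (Suc n) x)^2) = E m (\<lambda>x. vfun h (x (Suc n)))" by simp
  show ?case
    unfolding sq E_add c using Suc d by simp
qed

end

locale mcpi = mchain M X p0 P for M :: "'b measure" and X :: "nat \<Rightarrow> 'b \<Rightarrow> 'a::finite" and p0 P +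
  fixes \<pi> :: "'a \<Rightarrow> real"
  assumes irr: "irreducible_chain P" and inv: "invariant_distribution P \<pi>"
begin

lemma poisson': "(\<Sum>x\<in>UNIV. \<pi> x * g x) = 0 \<Longrightarrow> \<exists>h. \<forall>x. h x - Pop P h x = g x"
  using poisson[OF stoch irr inv] by blast

lemma pi_pos': "\<pi> y > 0" using pi_pos[OF stoch irr inv] .

lemma pi_sum: "(\<Sum>x\<in>UNIV. \<pi> x) = 1" using inv unfolding invariant_distribution_def prob_vector_def by auto

lemma cesaro:
  fixes v :: "'a \<Rightarrow> real"
  shows "\<exists>K. \<forall>n m. Suc n \<le> m \<longrightarrow> \<bar>(\<Sum>t\<in>{1..n}. E m (\<lambda>x. v (x t))) - real n * (\<Sum>u\<in>UNIV. \<pi> u * v u)\<bar> \<le> K"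
proof -
  define c where "c = (\<Sum>u\<in>UNIV. \<pi> u * v u)"
  have z: "(\<Sum>x\<in>UNIV. \<pi> x * (v x - c)) = 0"
    by (simp add: right_diff_distrib sum_subtractf c_def sum_distrib_right[symmetric] pi_sum)
  obtain h2 where h2: "\<And>x. h2 x - Pop P h2 x = v x - c" using poisson'[OF z] by blast
  have "\<bar>(\<Sum>t\<in>{1..n}. E m (\<lambda>x. v (x t))) - real n * c\<bar> \<le> 2 * nrm h2" if nm: "Suc n \<le> m" for n m
  proof -
    have m1: "m \<ge> 1" using nm by simp
    have "E m (\<lambda>x. v (x t)) - c = E m (\<lambda>x. h2 (x t)) - E m (\<lambda>x. h2 (x (Suc t)))" if t: "t \<in> {1..n}" for t
    proof -
      have "E m (\<lambda>x. v (x t)) - c = E m (\<lambda>x. v (x t) - c)" using E_const[OF m1, of c] by (simp add: E_diff)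
      also have "\<dots> = E m (\<lambda>x. h2 (x t) - Pop P h2 (x t))" by (simp add: h2)
      also have "\<dots> = E m (\<lambda>x. h2 (x t)) - E m (\<lambda>x. Pop P h2 (x t))" by (rule E_diff)
      also have "E m (\<lambda>x. Pop P h2 (x t)) = E m (\<lambda>x. h2 (x (Suc t)))"
        using E_markov1[of t m h2] t nm by simp
      finally show ?thesis .
    qed
    then have "(\<Sum>t\<in>{1..n}. E m (\<lambda>x. v (x t)) - c) = (\<Sum>t\<in>{1..<Suc n}. E m (\<lambda>x. h2 (x t)) - E m (\<lambda>x. h2 (x (Suc t))))"
      by (intro sum.cong) (auto simp: atLeastLessThanSuc_atLeastAtMost)
    also have "\<dots> = E m (\<lambda>x. h2 (x 1)) - E m (\<lambda>x. h2 (x (Suc n)))"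
      using sum_Suc_diff'[of 1 "Suc n" "\<lambda>t. - E m (\<lambda>x. h2 (x t))"] by simp
    finally have eq: "(\<Sum>t\<in>{1..n}. E m (\<lambda>x. v (x t))) - real n * c = E m (\<lambda>x. h2 (x 1) - h2 (x (Suc n)))"
      by (simp add: sum_subtractf E_diff)
    have "\<bar>E m (\<lambda>x. h2 (x 1) - h2 (x (Suc n)))\<bar> \<le> E m (\<lambda>_. 2 * nrm h2)"
    proof -
      have "E m (\<lambda>x. h2 (x 1) - h2 (x (Suc n))) \<le> E m (\<lambda>_. 2 * nrm h2)"
        by (rule E_mono) (rule nrm_diff1)
      moreover have "- E m (\<lambda>x. h2 (x 1) - h2 (x (Suc n))) \<le> E m (\<lambda>_. 2 * nrm h2)"
        unfolding E_cmult[of m "-1", simplified, symmetric]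
        by (rule E_mono) (simp add: nrm_diff1)
      ultimately show ?thesis by linarith
    qed
    then show ?thesis unfolding eq using E_const[OF m1] by simp
  qed
  then show ?thesis unfolding c_def by blast
qed

end

context prob_space
begin
lemma var_affine:
  assumes Z: "bdd_rv M Z"
  shows "variance (\<lambda>\<omega>. a * Z \<omega> + b) = a^2 * variance Z"
proof -
  have iZ: "integrable M Z" using Z by (rule bdd_integrable)
  have e: "expectation (\<lambda>\<omega>. a * Z \<omega> + b) = a * expectation Z + b"
    using iZ by (simp add: Bochner_Integration.integral_add prob_space)
  have "variance (\<lambda>\<omega>. a * Z \<omega> + b) = expectation (\<lambda>\<omega>. a^2 * (Z \<omega> - expectation Z)^2)"
    unfolding e by (intro arg_cong[where f=expectation] ext) (simp add: power2_eq_square algebra_simps)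
  also have "\<dots> = a^2 * variance Z" by simp
  finally show ?thesis .
qed
end

context mcpi
begin

lemma muhat_limit:
  assumes fmu: "(\<Sum>x\<in>UNIV. \<pi> x * f x) = \<mu>"
  shows "\<exists>L. (\<lambda>n. real n * prob_space.variance M (mu_hat f X n)) \<longlonglongrightarrow> L"
proof -
  interpret prob_space M by (rule ps)
  define g where "g u = f u - \<mu>" for u
  have g0: "(\<Sum>x\<in>UNIV. \<pi> x * g x) = 0"
    unfolding g_def using fmu pi_sum by (simp add: right_diff_distrib sum_subtractf sum_distrib_right[symmetric])
  obtain h where h: "\<And>x. h x - Pop P h x = g x" using poisson'[OF g0] by blast
  define H where "H = nrm h"
  define \<sigma>2 where "\<sigma>2 = (\<Sum>u\<in>UNIV. \<pi> u * vfun h u)"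
  define Q where "Q n = (\<Sum>t\<in>{1..n}. E (Suc n) (\<lambda>x. vfun h (x t)))" for n
  obtain K where K: "\<And>n m. Suc n \<le> m \<Longrightarrow> \<bar>(\<Sum>t\<in>{1..n}. E m (\<lambda>x. vfun h (x t))) - real n * \<sigma>2\<bar> \<le> K"
    using cesaro[of "vfun h"] unfolding \<sigma>2_def by blast
  have vnn: "vfun h u \<ge> 0" for u unfolding vfun_def by (intro sum_nonneg mult_nonneg_nonneg P_nonneg) auto
  have Qnn: "Q n \<ge> 0" for n
  proof -
    have "E (Suc n) (\<lambda>x. vfun h (x t)) \<ge> E (Suc n) (\<lambda>_. 0)" for t by (rule E_mono) (rule vnn)
    then show ?thesis unfolding Q_def E_zero by (intro sum_nonneg) auto
  qed
  have Qlim: "(\<lambda>n. Q n / real n) \<longlonglongrightarrow> \<sigma>2"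
  proof -
    have "(\<lambda>n. Q n / real n - \<sigma>2) \<longlonglongrightarrow> 0"
    proof (rule Lim_null_comparison)
      show "\<forall>\<^sub>F n in sequentially. norm (Q n / real n - \<sigma>2) \<le> K * (1 / real n)"
        using eventually_ge_at_top[of 1]
      proof eventually_elim
        case (elim n)
        have "\<bar>Q n - real n * \<sigma>2\<bar> \<le> K" unfolding Q_def by (rule K) simp
        moreover have "Q n / real n - \<sigma>2 = (Q n - real n * \<sigma>2) / real n" using elim by (simp add: field_simps)
        ultimately show ?case using elim by (simp add: abs_divide divide_right_mono)
      qed
      show "(\<lambda>n. K * (1 / real n)) \<longlonglongrightarrow> 0" by (intro tendsto_mult_right_zero lim_const_over_n)
    qed
    then show ?thesis using Lim_null by (simp add: LIM_zero_iff)
  qed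
  have main: "\<bar>real n * variance (mu_hat f X n) - Q n / real n\<bar> \<le> 4 * H^2 / real n + 4 * H * sqrt (Q n / real n) * (1 / sqrt (real n))"
    if n1: "n \<ge> 1" for n
  proof -
    define A where "A x = (\<Sum>t\<in>{1..n}. g (x t))" for x :: "nat \<Rightarrow> 'a"
    define B where "B x = Mt h n x" for x :: "nat \<Rightarrow> 'a"
    have dA: "dep (Suc n) A" unfolding A_def dep_def by (auto intro!: sum.cong)
    have dB: "dep (Suc n) B" unfolding B_def by (rule dep_Mt)
    have dAB: "dep (Suc n) (\<lambda>x. A x - B x)" using dA dB unfolding dep_def by metis
    have AB: "A x - B x = h (x 1) - h (x (Suc n))" for x
    proof -
      have "{1..n} = {1..<Suc n}" by auto
      then show ?thesis unfolding A_def B_def Mt_def using decomp[OF h, of 1 "Suc n" x] by simp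
    qed
    have bA: "bdd_rv M (\<lambda>\<omega>. A (\<lambda>i. X i \<omega>))" by (rule E_depfun_bdd[OF _ dA]) simp
    have bB: "bdd_rv M (\<lambda>\<omega>. B (\<lambda>i. X i \<omega>))" by (rule E_depfun_bdd[OF _ dB]) simp
    have "variance (\<lambda>\<omega>. B (\<lambda>i. X i \<omega>)) = E (Suc n) (\<lambda>x. (B x)^2) - (E (Suc n) B)^2"
      using var_E[OF _ dB] by simp
    also have "\<dots> = Q n" unfolding Q_def
      using E_Mt[of n "Suc n" h] E_Mt2[of n "Suc n" h] by (simp add: B_def[abs_def])
    finally have VB: "variance (\<lambda>\<omega>. B (\<lambda>i. X i \<omega>)) = Q n" .
    have VC: "variance (\<lambda>\<omega>. A (\<lambda>i. X i \<omega>) - B (\<lambda>i. X i \<omega>)) \<le> 4 * H^2"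
    proof -
      have "variance (\<lambda>\<omega>. A (\<lambda>i. X i \<omega>) - B (\<lambda>i. X i \<omega>)) = E (Suc n) (\<lambda>x. (A x - B x)^2) - (E (Suc n) (\<lambda>x. A x - B x))^2"
        using var_E[OF _ dAB] by simp
      also have "\<dots> \<le> E (Suc n) (\<lambda>x. (A x - B x)^2)" by simp
      also have "\<dots> \<le> E (Suc n) (\<lambda>_. (2 * H)^2)"
      proof (rule E_mono)
        fix x
        have "\<bar>A x - B x\<bar> \<le> 2 * H" unfolding AB H_def by (rule nrm_diff)
        then have "\<bar>A x - B x\<bar>^2 \<le> (2 * H)^2" by (intro power_mono) auto
        then show "(A x - B x)^2 \<le> (2 * H)^2" by simp
      qed
      also have "\<dots> = 4 * H^2" by (simp add: E_const power_mult_distrib)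
      finally show ?thesis .
    qed
    have VCnn: "variance (\<lambda>\<omega>. A (\<lambda>i. X i \<omega>) - B (\<lambda>i. X i \<omega>)) \<ge> 0" by (rule integral_nonneg_AE) auto
    have pert: "\<bar>variance (\<lambda>\<omega>. A (\<lambda>i. X i \<omega>)) - Q n\<bar> \<le> 4 * H^2 + 2 * sqrt (Q n * (4 * H^2))"
    proof -
      have "\<bar>variance (\<lambda>\<omega>. A (\<lambda>i. X i \<omega>)) - Q n\<bar> \<le> variance (\<lambda>\<omega>. A (\<lambda>i. X i \<omega>) - B (\<lambda>i. X i \<omega>))
          + 2 * sqrt (Q n * variance (\<lambda>\<omega>. A (\<lambda>i. X i \<omega>) - B (\<lambda>i. X i \<omega>)))"
        using var_perturb[OF bA bB] VB by simp
      also have "\<dots> \<le> 4 * H^2 + 2 * sqrt (Q n * (4 * H^2))"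
        using VC Qnn by (intro add_mono mult_left_mono real_sqrt_le_mono) auto
      finally show ?thesis .
    qed
    have mh: "mu_hat f X n \<omega> = (1 / real n) * A (\<lambda>i. X i \<omega>) + \<mu>" for \<omega>
    proof -
      have "(\<Sum>t = 1..n. f (X t \<omega>)) = A (\<lambda>i. X i \<omega>) + real n * \<mu>"
        unfolding A_def g_def by (simp add: sum_subtractf)
      then show ?thesis unfolding mu_hat_def using n1 by (simp add: field_simps)
    qed
    have "variance (mu_hat f X n) = (1 / real n)^2 * variance (\<lambda>\<omega>. A (\<lambda>i. X i \<omega>))"
      unfolding mh[abs_def] by (rule var_affine[OF bA])
    then have nv: "real n * variance (mu_hat f X n) = variance (\<lambda>\<omega>. A (\<lambda>i. X i \<omega>)) / real n"
      using n1 by (simp add: power2_eq_square field_simps)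
    have H0: "H \<ge> 0" unfolding H_def by (rule nrm_nonneg)
    have sq: "sqrt (Q n * (4 * H^2)) = 2 * H * sqrt (Q n)"
      using H0 by (simp add: real_sqrt_mult real_sqrt_abs)
    have sq2: "sqrt (Q n) / real n = sqrt (Q n / real n) * (1 / sqrt (real n))"
    proof -
      have ss: "sqrt (real n) * sqrt (real n) = real n" by simp
      have "sqrt (Q n / real n) * (1 / sqrt (real n)) = sqrt (Q n) / (sqrt (real n) * sqrt (real n))"
        by (simp add: real_sqrt_divide)
      then show ?thesis unfolding ss by simp
    qed
    have "\<bar>real n * variance (mu_hat f X n) - Q n / real n\<bar> = \<bar>variance (\<lambda>\<omega>. A (\<lambda>i. X i \<omega>)) - Q n\<bar> / real n"
      unfolding nv using n1 by (simp add: abs_divide diff_divide_distrib[symmetric])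
    also have "\<dots> \<le> (4 * H^2 + 2 * sqrt (Q n * (4 * H^2))) / real n"
      using pert n1 by (intro divide_right_mono) auto
    also have "\<dots> = 4 * H^2 / real n + 4 * H * (sqrt (Q n) / real n)"
      unfolding sq by (simp add: add_divide_distrib)
    also have "\<dots> = 4 * H^2 / real n + 4 * H * sqrt (Q n / real n) * (1 / sqrt (real n))"
      unfolding sq2 by simp
    finally show ?thesis .
  qed
  have "(\<lambda>n. real n * variance (mu_hat f X n) - Q n / real n) \<longlonglongrightarrow> 0"
  proof (rule Lim_null_comparison)
    show "\<forall>\<^sub>F n in sequentially. norm (real n * variance (mu_hat f X n) - Q n / real n)
        \<le> 4 * H^2 / real n + 4 * H * sqrt (Q n / real n) * (1 / sqrt (real n))"
      using eventually_ge_at_top[of 1] by eventually_elim (use main in auto)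
    have z1: "(\<lambda>n. 1 / sqrt (real n)) \<longlonglongrightarrow> 0" by real_asymp
    have z2: "(\<lambda>n. 4 * H^2 / real n) \<longlonglongrightarrow> 0" by real_asymp
    have z3: "(\<lambda>n. 4 * H * sqrt (Q n / real n) * (1 / sqrt (real n))) \<longlonglongrightarrow> 4 * H * sqrt \<sigma>2 * 0"
      by (intro tendsto_mult tendsto_const tendsto_real_sqrt Qlim z1)
    show "(\<lambda>n. 4 * H^2 / real n + 4 * H * sqrt (Q n / real n) * (1 / sqrt (real n))) \<longlonglongrightarrow> 0"
      using tendsto_add[OF z2 z3] by simp
  qed
  from tendsto_add[OF this Qlim] have "(\<lambda>n. real n * variance (mu_hat f X n)) \<longlonglongrightarrow> \<sigma>2" by simp
  then show ?thesis by blast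
qed

end

lemma card_filter_real: "finite A \<Longrightarrow> real (card {t\<in>A. P t}) = (\<Sum>t\<in>A. of_bool (P t))"
proof -
  assume A: "finite A"
  have "real (card {t\<in>A. P t}) = (\<Sum>t\<in>{t\<in>A. P t}. 1)" by simp
  also have "\<dots> = (\<Sum>t\<in>A. if P t then 1 else 0)" using A by (rule sum.inter_filter)
  finally show ?thesis by (simp add: of_bool_def)
qed

lemma visits_real: "real (visits S X j \<omega>) = (\<Sum>t\<in>{1..<Suc j}. of_bool (X t \<omega> \<in> S))"
proof -
  have "real (visits S X j \<omega>) = (\<Sum>t\<in>{1..j}. of_bool (X t \<omega> \<in> S))"
    unfolding visits_def by (rule card_filter_real) simp
  also have "{1..j} = {1..<Suc j}" by auto
  finally show ?thesis .
qed

lemma visits_Suc: "visits S X (Suc j) \<omega> = visits S X j \<omega> + (if X (Suc j) \<omega> \<in> S then 1 else 0)"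
proof -
  have "real (visits S X (Suc j) \<omega>) = real (visits S X j \<omega> + (if X (Suc j) \<omega> \<in> S then 1 else 0))"
  proof -
    have "(\<Sum>t\<in>{1..<Suc (Suc j)}. of_bool (X t \<omega> \<in> S)) = (\<Sum>t\<in>{1..<Suc j}. of_bool (X t \<omega> \<in> S)) + (of_bool (X (Suc j) \<omega> \<in> S) :: real)"
      by (rule sum.atLeastLessThan_Suc) simp
    then have "real (visits S X (Suc j) \<omega>) = real (visits S X j \<omega>) + of_bool (X (Suc j) \<omega> \<in> S)"
      unfolding visits_real .
    then show ?thesis by simp
  qed
  then show ?thesis by (simp only: of_nat_eq_iff)
qed

lemma visits_0: "visits S X 0 \<omega> = 0" unfolding visits_def by simp

lemma visits_mono: "i \<le> j \<Longrightarrow> visits S X i \<omega> \<le> visits S X j \<omega>"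
  unfolding visits_def by (intro card_mono) auto

lemma visits_ivt: "k \<le> visits S X m \<omega> \<Longrightarrow> \<exists>j\<le>m. visits S X j \<omega> = k"
proof (induction m)
  case 0 then show ?case by (simp add: visits_0)
next
  case (Suc m)
  show ?case
  proof (cases "k \<le> visits S X m \<omega>")
    case True then show ?thesis using Suc.IH by (meson le_Suc_eq)
  next
    case False
    then have "k = visits S X (Suc m) \<omega>" using Suc.prems unfolding visits_Suc by (auto split: if_splits)
    then show ?thesis by blast
  qed
qed

lemma hit_window:
  assumes k1: "k \<le> visits S X m1 \<omega>" and k0: "visits S X m0 \<omega> < k"
  shows "m0 < hitN S X k \<omega> \<and> hitN S X k \<omega> \<le> m1 \<and> visits S X (hitN S X k \<omega>) \<omega> = k"
proof -
  obtain j where j: "j \<le> m1" "visits S X j \<omega> = k" using visits_ivt[OF k1] by blast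
  have v: "visits S X (hitN S X k \<omega>) \<omega> = k" unfolding hitN_def by (rule LeastI[of _ j]) (rule j(2))
  have le: "hitN S X k \<omega> \<le> j" unfolding hitN_def by (rule Least_le) (rule j(2))
  have "m0 < hitN S X k \<omega>"
  proof (rule ccontr)
    assume "\<not> m0 < hitN S X k \<omega>"
    then have "visits S X (hitN S X k \<omega>) \<omega> \<le> visits S X m0 \<omega>" by (intro visits_mono) simp
    with v k0 show False by simp
  qed
  with v le j show ?thesis by simp
qed

lemma det_bound:
  fixes SN Sn B A W :: real and N n :: nat
  assumes n1: "n \<ge> 1" and N2: "real n \<le> 2 * real N" and NW: "\<bar>real N - real n\<bar> \<le> W"
    and SB: "\<bar>SN - Sn\<bar> \<le> B" and SA: "\<bar>Sn\<bar> \<le> A"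
  shows "\<bar>SN / real N - Sn / real n\<bar> \<le> 2 * B / real n + 2 * A * W / (real n)^2"
proof -
  have N0: "real N > 0" using n1 N2 by simp
  have n0: "real n > 0" using n1 by simp
  have eq: "SN / real N - Sn / real n = (SN - Sn) / real N + Sn * (real n - real N) / (real N * real n)"
    using N0 n0 by (simp add: field_simps)
  have iN: "1 / real N \<le> 2 / real n" using N0 n0 N2 by (simp add: field_simps)
  have B0: "B \<ge> 0" using SB by linarith
  have A0: "A \<ge> 0" using SA by linarith
  have W0: "W \<ge> 0" using NW by linarith
  have t1: "\<bar>(SN - Sn) / real N\<bar> \<le> 2 * B / real n"
  proof -
    have "\<bar>(SN - Sn) / real N\<bar> = \<bar>SN - Sn\<bar> * (1 / real N)" using N0 by (simp add: abs_divide)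
    also have "\<dots> \<le> B * (2 / real n)" using SB iN B0 by (intro mult_mono) auto
    also have "\<dots> = 2 * B / real n" by simp
    finally show ?thesis .
  qed
  have t2: "\<bar>Sn * (real n - real N) / (real N * real n)\<bar> \<le> 2 * A * W / (real n)^2"
  proof -
    have "\<bar>Sn * (real n - real N) / (real N * real n)\<bar> = (\<bar>Sn\<bar> * \<bar>real N - real n\<bar>) * (1 / real N) * (1 / real n)"
      using N0 n0 by (simp add: abs_divide abs_mult abs_minus_commute)
    also have "\<dots> \<le> (A * W) * (2 / real n) * (1 / real n)"
      using SA NW iN A0 W0 n0 by (intro mult_mono mult_nonneg_nonneg) auto
    also have "\<dots> = 2 * A * W / (real n)^2" by (simp add: power2_eq_square)
    finally show ?thesis .
  qed
  show ?thesis unfolding eq using t1 t2 abs_triangle_ineq[of "(SN - Sn) / real N" "Sn * (real n - real N) / (real N * real n)"]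
    by linarith
qed

locale mtil = mcpi M X p0 P \<pi> for M :: "'b measure" and X :: "nat \<Rightarrow> 'b \<Rightarrow> 'a::finite" and p0 P \<pi> +
  fixes f :: "'a \<Rightarrow> real" and \<mu> :: real and S :: "'a set"
  assumes fmu: "(\<Sum>x\<in>UNIV. \<pi> x * f x) = \<mu>" and Sne: "S \<noteq> {}"
begin

definition "pS = dist_mass \<pi> S"
definition "gf u = f u - \<mu>"
definition "ee u = of_bool (u \<in> S) - pS"
definition "hg = (SOME h. \<forall>x. h x - Pop P h x = gf x)"
definition "he = (SOME h. \<forall>x. h x - Pop P h x = ee x)"
definition "Hg = nrm hg"
definition "He = nrm he"
definition rho :: "nat \<Rightarrow> real" where "rho n = real n powr (1/5)"
definition "Wn n = nat \<lceil>(2 * (rho n ^ 3 + 2 * He) + 1) / pS\<rceil>"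
definition "Ssum j x = (\<Sum>t\<in>{1..<Suc j}. gf (x t))"
definition "Vsum j x = (\<Sum>t\<in>{1..<Suc j}. ee (x t))"
definition "good n x \<longleftrightarrow> (\<forall>m\<in>{1..2*n}. \<bar>Vsum m x\<bar> < rho n ^ 3 + 2 * He)
   \<and> (\<forall>m\<in>{n - Wn n..n + Wn n}. \<bar>Ssum m x - Ssum n x\<bar> < rho n ^ 2 + 2 * Hg)
   \<and> \<bar>Ssum n x\<bar> < rho n ^ 3 + 2 * Hg"
definition "kk n = nat \<lceil>real n * pS\<rceil>"
definition "bnd n = (2 * (rho n^2 + 2*Hg) / real n + 2 * (rho n^3 + 2*Hg) * real (Wn n) / (real n)^2)^2"

lemma pS_pos: "pS > 0"
proof -
  obtain s where s: "s \<in> S" using Sne by blast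
  have "0 < \<pi> s" by (rule pi_pos')
  also have "\<dots> \<le> (\<Sum>x\<in>S. \<pi> x)" by (rule member_le_sum) (use s pi_pos' in \<open>auto intro: less_imp_le\<close>)
  finally show ?thesis unfolding pS_def dist_mass_def .
qed

lemma pS_le1: "pS \<le> 1"
proof -
  have "(\<Sum>x\<in>S. \<pi> x) \<le> (\<Sum>x\<in>UNIV. \<pi> x)" by (rule sum_mono2) (auto intro: less_imp_le pi_pos')
  then show ?thesis using pi_sum unfolding pS_def dist_mass_def by simp
qed

lemma gf0: "(\<Sum>x\<in>UNIV. \<pi> x * gf x) = 0"
  unfolding gf_def using fmu pi_sum by (simp add: right_diff_distrib sum_subtractf sum_distrib_right[symmetric])

lemma ee0: "(\<Sum>x\<in>UNIV. \<pi> x * ee x) = 0"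
proof -
  have "(\<Sum>x\<in>UNIV. \<pi> x * of_bool (x \<in> S)) = (\<Sum>x\<in>UNIV. if x \<in> S then \<pi> x else 0)"
    by (intro sum.cong) auto
  also have "\<dots> = (\<Sum>x\<in>S. \<pi> x)" using sum.inter_restrict[of UNIV \<pi> S] by simp
  finally have "(\<Sum>x\<in>UNIV. \<pi> x * of_bool (x \<in> S)) = (\<Sum>x\<in>S. \<pi> x)" .
  then show ?thesis unfolding ee_def using pi_sum
    by (simp add: right_diff_distrib sum_subtractf sum_distrib_right[symmetric] pS_def dist_mass_def)
qed

lemma hg: "hg x - Pop P hg x = gf x"
  using someI_ex[OF poisson'[OF gf0]] unfolding hg_def by blast

lemma he: "he x - Pop P he x = ee x"
  using someI_ex[OF poisson'[OF ee0]] unfolding he_def by blast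

lemma rho_pow5: "rho n ^ 5 = real n"
proof (cases "n = 0")
  case True then show ?thesis unfolding rho_def by simp
next
  case False
  then have a: "real n powr (1/5) > 0" by simp
  have "(real n powr (1/5)) ^ 5 = (real n powr (1/5)) powr (real 5)"
    using a by (simp add: powr_realpow)
  also have "\<dots> = real n" by (simp add: powr_powr)
  finally show ?thesis unfolding rho_def .
qed

lemma rho_ge1: "n \<ge> 1 \<Longrightarrow> rho n \<ge> 1"
  unfolding rho_def by (intro ge_one_powr_ge_zero) auto

lemma Vsum_visits: "real (visits S X j \<omega>) = Vsum j (\<lambda>i. X i \<omega>) + real j * pS"
  unfolding visits_real Vsum_def ee_def by (simp add: sum_subtractf)

lemma pointwise:
  assumes n1: "n \<ge> 1" and W2: "2 * Wn n < n" and G: "good n (\<lambda>i. X i \<omega>)"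
  shows "(mu_tilde S f X (kk n) \<omega> - mu_hat f X n \<omega>)^2 \<le> bnd n"
proof -
  define x where "x = (\<lambda>i. X i \<omega>)"
  define W where "W = Wn n"
  define A where "A = rho n ^ 3 + 2 * He"
  define k where "k = kk n"
  have A0: "A \<ge> 0" unfolding A_def He_def using rho_ge1[OF n1] nrm_nonneg[of he] by simp
  have G1: "\<bar>real (visits S X m \<omega>) - real m * pS\<bar> < A" if "m \<in> {1..2*n}" for m
    using G that unfolding good_def Vsum_visits A_def by auto
  have Wp: "real W * pS \<ge> 2 * A + 1"
  proof -
    have "(2 * A + 1) / pS \<le> real W" unfolding W_def Wn_def A_def[symmetric] by (rule real_nat_ceiling_ge)
    then show ?thesis using pS_pos by (simp add: divide_le_eq)
  qed
  have y0: "real n * pS \<ge> 0" using pS_pos by simp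
  have kr: "real k = real_of_int \<lceil>real n * pS\<rceil>" unfolding k_def kk_def using y0 by simp
  have k_ub: "real k < real n * pS + 1" unfolding kr using ceiling_correct[of "real n * pS"] by linarith
  have k_lb: "real n * pS \<le> real k" unfolding kr using ceiling_correct[of "real n * pS"] by linarith
  have Wn: "W < n" using W2 unfolding W_def by simp
  have m1: "k \<le> visits S X (n + W) \<omega>"
  proof -
    have "n + W \<in> {1..2*n}" using Wn n1 by auto
    then have "real (n + W) * pS - A < real (visits S X (n + W) \<omega>)" using G1[of "n + W"] by (simp add: abs_less_iff)
    moreover have "real (n + W) * pS = real n * pS + real W * pS" by (simp add: algebra_simps)
    ultimately have "real k < real (visits S X (n + W) \<omega>)" using Wp k_ub A0 by linarith
    then show ?thesis by simp
  qed
  have m0: "visits S X (n - W) \<omega> < k"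
  proof -
    have "n - W \<in> {1..2*n}" using Wn by auto
    then have "real (visits S X (n - W) \<omega>) < real (n - W) * pS + A" using G1[of "n - W"] by (simp add: abs_less_iff)
    moreover have "real (n - W) * pS = real n * pS - real W * pS" using Wn by (simp add: of_nat_diff algebra_simps)
    ultimately have "real (visits S X (n - W) \<omega>) < real k" using Wp k_lb A0 by linarith
    then show ?thesis by simp
  qed
  define N where "N = hitN S X k \<omega>"
  have Nw: "n - W < N" "N \<le> n + W" using hit_window[OF m1 m0] unfolding N_def by auto
  have N1: "N \<ge> 1" using Nw by simp
  have N2: "real n \<le> 2 * real N" using Nw W2 unfolding W_def by linarith
  have NW: "\<bar>real N - real n\<bar> \<le> real W" using Nw Wn by (simp add: abs_le_iff)
  have SB: "\<bar>Ssum N x - Ssum n x\<bar> \<le> rho n ^ 2 + 2 * Hg"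
    using G Nw unfolding good_def x_def W_def by (auto intro: less_imp_le)
  have SA: "\<bar>Ssum n x\<bar> \<le> rho n ^ 3 + 2 * Hg"
    using G unfolding good_def x_def by (auto intro: less_imp_le)
  have sumf: "(\<Sum>t = 1..j. f (X t \<omega>)) = Ssum j x + real j * \<mu>" for j
  proof -
    have "{1..j} = {1..<Suc j}" by auto
    then show ?thesis unfolding Ssum_def gf_def x_def by (simp add: sum_subtractf)
  qed
  have mt: "mu_tilde S f X k \<omega> = Ssum N x / real N + \<mu>"
    unfolding mu_tilde_def N_def[symmetric] sumf using N1 by (simp add: field_simps)
  have mh: "mu_hat f X n \<omega> = Ssum n x / real n + \<mu>"
    unfolding mu_hat_def sumf using n1 by (simp add: field_simps)
  have "\<bar>mu_tilde S f X (kk n) \<omega> - mu_hat f X n \<omega>\<bar> \<le> 2 * (rho n^2 + 2*Hg) / real n + 2 * (rho n^3 + 2*Hg) * real (Wn n) / (real n)^2"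
    unfolding k_def[symmetric] mt mh using det_bound[OF n1 N2 NW SB SA] unfolding W_def by simp
  then have "\<bar>mu_tilde S f X (kk n) \<omega> - mu_hat f X n \<omega>\<bar>^2 \<le> bnd n"
    unfolding bnd_def by (intro power_mono) auto
  then show ?thesis by simp
qed

end

lemma of_bool_ex_le_sum:
  assumes "finite I"
  shows "(of_bool (\<exists>m\<in>I. Q m) :: real) \<le> (\<Sum>m\<in>I. of_bool (Q m))"
proof (cases "\<exists>m\<in>I. Q m")
  case True
  then obtain m where m: "m \<in> I" "Q m" by blast
  have "(1::real) = of_bool (Q m)" using m by simp
  also have "\<dots> \<le> (\<Sum>m\<in>I. of_bool (Q m))" by (rule member_le_sum) (use m assms in auto)
  finally show ?thesis using True by simp
qed (simp add: sum_nonneg)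

context mtil
begin

definition "ce = 2 * He + 1"
definition "cg = 2 * Hg + 1"

lemma He0: "He \<ge> 0" unfolding He_def by (rule nrm_nonneg)
lemma Hg0: "Hg \<ge> 0" unfolding Hg_def by (rule nrm_nonneg)

lemma Wn_ge1: "n \<ge> 1 \<Longrightarrow> Wn n \<ge> 1"
proof -
  assume n1: "n \<ge> 1"
  have "0 < 2 * (rho n ^ 3 + 2 * He) + 1" using rho_ge1[OF n1] He0 by (simp add: add_pos_nonneg)
  then have "0 < (2 * (rho n ^ 3 + 2 * He) + 1) / pS" using pS_pos by simp
  then show ?thesis unfolding Wn_def by linarith
qed

lemma Ssum_window:
  "\<bar>Ssum m x - Ssum n x\<bar> = \<bar>\<Sum>t\<in>{Suc (min m n)..<Suc (max m n)}. gf (x t)\<bar>"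
proof (cases "n \<le> m")
  case True
  have "(\<Sum>t\<in>{1..<Suc n}. gf (x t)) + (\<Sum>t\<in>{Suc n..<Suc m}. gf (x t)) = (\<Sum>t\<in>{1..<Suc m}. gf (x t))"
    by (rule sum.atLeastLessThan_concat) (use True in auto)
  then have "Ssum m x = Ssum n x + (\<Sum>t\<in>{Suc n..<Suc m}. gf (x t))"
    unfolding Ssum_def by simp
  then show ?thesis using True by (simp add: max_def min_def)
next
  case False
  have "(\<Sum>t\<in>{1..<Suc m}. gf (x t)) + (\<Sum>t\<in>{Suc m..<Suc n}. gf (x t)) = (\<Sum>t\<in>{1..<Suc n}. gf (x t))"
    by (rule sum.atLeastLessThan_concat) (use False in auto)
  then have "Ssum n x = Ssum m x + (\<Sum>t\<in>{Suc m..<Suc n}. gf (x t))"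
    unfolding Ssum_def by simp
  then show ?thesis using False by (simp add: max_def min_def abs_minus_commute)
qed

lemma bad_bound:
  assumes n1: "n \<ge> 1" and W2: "2 * Wn n < n"
  shows "E (2*n+2) (\<lambda>x. of_bool (\<not> good n x))
     \<le> real (2*n) * (2 * exp (- (rho n / (8 * ce^2))))
       + real (2 * Wn n + 1) * (2 * exp (- (rho n ^ 4 / (4 * real (Wn n) * cg^2))))
       + 2 * exp (- (rho n / (4 * cg^2)))"
proof -
  define T where "T = 2*n+2"
  define W where "W = Wn n"
  define r where "r = rho n"
  have r1: "r \<ge> 1" unfolding r_def by (rule rho_ge1[OF n1])
  have r5: "r^5 = real n" unfolding r_def by (rule rho_pow5)
  have W1: "W \<ge> 1" unfolding W_def by (rule Wn_ge1[OF n1])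
  have Wn: "W < n" using W2 unfolding W_def by simp
  have r6: "(r^3)^2 = r * real n" unfolding r5[symmetric] by (simp add: numeral_eq_Suc)
  have n0: "real n > 0" using n1 by simp
  define Q1 where "Q1 m x = (r ^ 3 + 2 * He \<le> \<bar>Vsum m x\<bar>)" for m x
  define Q2 where "Q2 m x = (r ^ 2 + 2 * Hg \<le> \<bar>Ssum m x - Ssum n x\<bar>)" for m x
  define Q3 where "Q3 x = (r ^ 3 + 2 * Hg \<le> \<bar>Ssum n x\<bar>)" for x
  have pt: "of_bool (\<not> good n x) \<le> (\<Sum>m\<in>{1..2*n}. of_bool (Q1 m x)) + (\<Sum>m\<in>{n-W..n+W}. of_bool (Q2 m x)) + (of_bool (Q3 x) :: real)" for x
  proof -
    have "(\<not> good n x) = ((\<exists>m\<in>{1..2*n}. Q1 m x) \<or> (\<exists>m\<in>{n-W..n+W}. Q2 m x) \<or> Q3 x)"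
      unfolding good_def Q1_def Q2_def Q3_def W_def r_def by (auto simp: not_less)
    then have "(of_bool (\<not> good n x) :: real) \<le> of_bool (\<exists>m\<in>{1..2*n}. Q1 m x) + of_bool (\<exists>m\<in>{n-W..n+W}. Q2 m x) + of_bool (Q3 x)"
      by auto
    also have "\<dots> \<le> (\<Sum>m\<in>{1..2*n}. of_bool (Q1 m x)) + (\<Sum>m\<in>{n-W..n+W}. of_bool (Q2 m x)) + of_bool (Q3 x)"
      by (intro add_mono of_bool_ex_le_sum order_refl) auto
    finally show ?thesis .
  qed
  have b1: "E T (\<lambda>x. of_bool (Q1 m x)) \<le> 2 * exp (- (r / (8 * ce^2)))" if m: "m \<in> {1..2*n}" for m
  proof -
    have "E T (\<lambda>x. of_bool (Q1 m x)) \<le> 2 * exp (- ((r^3)^2) / (4 * real (Suc m - 1) * (2 * nrm he + 1)^2))"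
      unfolding Q1_def Vsum_def He_def using m r1 unfolding T_def
      by (intro dev_g[OF he]) auto
    also have "\<dots> \<le> 2 * exp (- (r / (8 * ce^2)))"
    proof -
      have ce: "ce \<ge> 1" unfolding ce_def using He0 by simp
      have "(r^3)^2 / (4 * real m * ce^2) \<ge> (r^3)^2 / (4 * real (2*n) * ce^2)"
        using m ce r1 by (intro divide_left_mono mult_right_mono mult_left_mono) auto
      also have "(r^3)^2 / (4 * real (2*n) * ce^2) = r / (8 * ce^2)"
        unfolding r6 using n0 by (simp add: field_simps)
      finally have "r / (8 * ce^2) \<le> (r^3)^2 / (4 * real m * ce^2)" .
      then show ?thesis unfolding ce_def He_def by simp
    qed
    finally show ?thesis .
  qed
  have b2: "E T (\<lambda>x. of_bool (Q2 m x)) \<le> 2 * exp (- (r ^ 4 / (4 * real W * cg^2)))" if m: "m \<in> {n-W..n+W}" for m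
  proof (cases "m = n")
    case True
    have "E T (\<lambda>x. of_bool (Q2 m x)) = E T (\<lambda>_. 0)"
      unfolding Q2_def True using r1 Hg0 by (intro arg_cong[where f="E T"] ext) (simp add: add_pos_nonneg not_le)
    then show ?thesis by (simp add: E_zero)
  next
    case False
    define L where "L = Suc (max m n) - Suc (min m n)"
    have L1: "L \<ge> 1" using False unfolding L_def by (auto simp: max_def min_def)
    have LW: "L \<le> W" using m unfolding L_def by (auto simp: max_def min_def)
    have "E T (\<lambda>x. of_bool (Q2 m x)) \<le> 2 * exp (- ((r^2)^2) / (4 * real L * (2 * nrm hg + 1)^2))"
      unfolding Q2_def Ssum_window Hg_def L_def using m r1 Wn unfolding T_def
      by (intro dev_g[OF hg]) (auto simp: max_def min_def)
    also have "\<dots> \<le> 2 * exp (- (r ^ 4 / (4 * real W * cg^2)))"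
    proof -
      have cg: "cg \<ge> 1" unfolding cg_def using Hg0 by simp
      have "(r^2)^2 / (4 * real L * cg^2) \<ge> (r^2)^2 / (4 * real W * cg^2)"
        using L1 LW cg by (intro divide_left_mono mult_right_mono mult_left_mono) auto
      then show ?thesis unfolding cg_def Hg_def by (simp add: power_mult[symmetric])
    qed
    finally show ?thesis .
  qed
  have b3: "E T (\<lambda>x. of_bool (Q3 x)) \<le> 2 * exp (- (r / (4 * cg^2)))"
  proof -
    have "E T (\<lambda>x. of_bool (Q3 x)) \<le> 2 * exp (- ((r^3)^2) / (4 * real (Suc n - 1) * (2 * nrm hg + 1)^2))"
      unfolding Q3_def Ssum_def Hg_def using n1 unfolding T_def
      by (intro dev_g[OF hg]) (use r1 in auto)
    moreover have "(r^3)^2 / (4 * real (Suc n - 1) * (2 * nrm hg + 1)^2) = r / (4 * cg^2)"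
      unfolding cg_def[symmetric] Hg_def[symmetric] r6 using n0 by (simp add: field_simps)
    ultimately show ?thesis unfolding minus_divide_left[symmetric] by simp
  qed
  have "E T (\<lambda>x. of_bool (\<not> good n x)) \<le> E T (\<lambda>x. (\<Sum>m\<in>{1..2*n}. of_bool (Q1 m x)) + (\<Sum>m\<in>{n-W..n+W}. of_bool (Q2 m x)) + of_bool (Q3 x))"
    by (rule E_mono[OF pt])
  also have "\<dots> = (\<Sum>m\<in>{1..2*n}. E T (\<lambda>x. of_bool (Q1 m x))) + (\<Sum>m\<in>{n-W..n+W}. E T (\<lambda>x. of_bool (Q2 m x))) + E T (\<lambda>x. of_bool (Q3 x))"
    by (simp only: E_add E_sum)
  also have "\<dots> \<le> (\<Sum>m\<in>{1..2*n}. 2 * exp (- (r / (8 * ce^2)))) + (\<Sum>m\<in>{n-W..n+W}. 2 * exp (- (r ^ 4 / (4 * real W * cg^2)))) + 2 * exp (- (r / (4 * cg^2)))"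
    by (intro add_mono sum_mono b1 b2 b3)
  also have "\<dots> = real (2*n) * (2 * exp (- (r / (8 * ce^2)))) + real (card {n-W..n+W}) * (2 * exp (- (r ^ 4 / (4 * real W * cg^2)))) + 2 * exp (- (r / (4 * cg^2)))"
    by simp
  also have "real (card {n-W..n+W}) = real (2 * W + 1)" using Wn by simp
  finally show ?thesis unfolding T_def W_def r_def .
qed

end

context mchain
begin

lemma visits_meas: "(\<lambda>\<omega>. visits S X j \<omega> = k) \<in> measurable M (count_space UNIV)"
proof -
  define G where "G x = real (card {t\<in>{1..j}. x t \<in> S})" for x :: "nat \<Rightarrow> 'a"
  have dG: "dep (Suc j) G" unfolding dep_def G_def
  proof (intro allI impI)
    fix x x' :: "nat \<Rightarrow> 'a" assume "\<forall>i\<in>{1..Suc j}. x i = x' i"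
    then have "{t\<in>{1..j}. x t \<in> S} = {t\<in>{1..j}. x' t \<in> S}" by auto
    then show "real (card {t\<in>{1..j}. x t \<in> S}) = real (card {t\<in>{1..j}. x' t \<in> S})" by simp
  qed
  have m[measurable]: "(\<lambda>\<omega>. G (\<lambda>i. X i \<omega>)) \<in> borel_measurable M"
    using E_depfun_bdd[OF _ dG] unfolding bdd_rv_def by simp
  have eq: "(\<lambda>\<omega>. visits S X j \<omega> = k) = (\<lambda>\<omega>. G (\<lambda>i. X i \<omega>) = real k)"
    unfolding G_def visits_def by auto
  show ?thesis unfolding eq by measurable
qed

lemma hitN_meas: "hitN S X k \<in> measurable M (count_space UNIV)"
  unfolding hitN_def[abs_def] by (rule measurable_Least) (rule visits_meas)

lemma avg_bound: "\<bar>(1 / real j) * (\<Sum>t=1..j. f (X t \<omega>))\<bar> \<le> nrm f"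
proof (cases "j = 0")
  case False
  have "\<bar>\<Sum>t=1..j. f (X t \<omega>)\<bar> \<le> (\<Sum>t=1..j. nrm f)"
    by (rule order_trans[OF sum_abs]) (intro sum_mono nrm_ge)
  also have "\<dots> = real j * nrm f" by simp
  finally show ?thesis using False by (simp add: abs_mult field_simps)
qed (simp add: nrm_nonneg)

lemma avg_dep: "dep (Suc j) (\<lambda>x. (1 / real j) * (\<Sum>t=1..j. f (x t)))"
  unfolding dep_def by (auto intro!: sum.cong arg_cong[where f="\<lambda>s. _ * s"])

lemma mu_hat_bdd: "bdd_rv M (mu_hat f X n)"
proof -
  have "bdd_rv M (\<lambda>\<omega>. (\<lambda>x. (1 / real n) * (\<Sum>t=1..n. f (x t))) (\<lambda>i. X i \<omega>))"
    by (rule E_depfun_bdd[OF _ avg_dep]) simp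
  then show ?thesis unfolding mu_hat_def[abs_def] by simp
qed

lemma mu_tilde_bdd: "bdd_rv M (mu_tilde S f X k)"
  unfolding bdd_rv_def
proof
  have each: "(\<lambda>\<omega>. (1 / real j) * (\<Sum>t=1..j. f (X t \<omega>))) \<in> borel_measurable M" for j
    using E_depfun_bdd[OF _ avg_dep[of j f]] unfolding bdd_rv_def by simp
  have "(\<lambda>\<omega>. (\<lambda>j \<omega>. (1 / real j) * (\<Sum>t=1..j. f (X t \<omega>))) (hitN S X k \<omega>) \<omega>) \<in> borel_measurable M"
    by (rule measurable_compose_countable'[OF each hitN_meas]) simp
  then show "mu_tilde S f X k \<in> borel_measurable M" unfolding mu_tilde_def[abs_def] by simp
  show "\<exists>K. \<forall>\<omega>\<in>space M. \<bar>mu_tilde S f X k \<omega>\<bar> \<le> K"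
    unfolding mu_tilde_def using avg_bound by blast
qed

end

context mtil
begin

lemma dep_good:
  assumes W: "Wn n < n"
  shows "dep (2*n+2) (\<lambda>x. of_bool (good n x) :: real)"
  unfolding dep_def
proof (intro allI impI)
  fix x x' :: "nat \<Rightarrow> 'a" assume h: "\<forall>i\<in>{1..2*n+2}. x i = x' i"
  have V: "Vsum m x = Vsum m x'" if "m \<le> 2*n" for m
    unfolding Vsum_def using h that by (intro sum.cong) auto
  have Sm: "Ssum m x = Ssum m x'" if "m \<le> 2*n" for m
    unfolding Ssum_def using h that by (intro sum.cong) auto
  have "good n x = good n x'"
    unfolding good_def using V Sm W by (auto simp: Ball_def)
  then show "(of_bool (good n x) :: real) = of_bool (good n x')" by simp
qed

lemma Cbound:
  assumes n1: "n \<ge> 1" and W2: "2 * Wn n < n"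
  shows "prob_space.variance M (\<lambda>\<omega>. mu_tilde S f X (kk n) \<omega> - mu_hat f X n \<omega>)
     \<le> bnd n + (2 * nrm f)^2 * E (2*n+2) (\<lambda>x. of_bool (\<not> good n x))"
proof -
  interpret prob_space M by (rule ps)
  define T where "T = 2*n+2"
  define F where "F = nrm f"
  define C where "C \<omega> = mu_tilde S f X (kk n) \<omega> - mu_hat f X n \<omega>" for \<omega>
  define Phi where "Phi x = bnd n * of_bool (good n x) + (2 * F)^2 * (1 - of_bool (good n x))" for x
  have dgood: "dep T (\<lambda>x. of_bool (good n x) :: real)" unfolding T_def by (rule dep_good) (use W2 in simp)
  have dPhi: "dep T Phi" using dgood unfolding dep_def Phi_def by metis
  have T1: "T \<ge> 1" unfolding T_def by simp
  have Cb: "bdd_rv M C" unfolding C_def by (intro bdd_diff mu_tilde_bdd mu_hat_bdd)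
  have C2b: "bdd_rv M (\<lambda>\<omega>. (C \<omega>)^2)" using bdd_mult[OF Cb Cb] by (simp add: power2_eq_square)
  have pt: "(C \<omega>)^2 \<le> Phi (\<lambda>i. X i \<omega>)" for \<omega>
  proof (cases "good n (\<lambda>i. X i \<omega>)")
    case True
    then show ?thesis unfolding Phi_def C_def using pointwise[OF n1 W2 True] by simp
  next
    case False
    have "\<bar>C \<omega>\<bar> \<le> F + F" unfolding C_def F_def mu_tilde_def mu_hat_def
      by (rule order_trans[OF abs_triangle_ineq4 add_mono]) (rule avg_bound)+
    then have "\<bar>C \<omega>\<bar>^2 \<le> (2 * F)^2" by (intro power_mono) auto
    then show ?thesis unfolding Phi_def using False by simp
  qed
  have "variance C \<le> expectation (\<lambda>\<omega>. (C \<omega>)^2)" by (rule var_le_sq[OF Cb])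
  also have "\<dots> \<le> expectation (\<lambda>\<omega>. Phi (\<lambda>i. X i \<omega>))"
    by (rule integral_mono[OF bdd_integrable[OF C2b] E_integrable[OF T1 dPhi] pt])
  also have "\<dots> = E T Phi" by (rule E_expectation[OF T1 dPhi])
  also have "\<dots> \<le> E T (\<lambda>x. bnd n + (2 * F)^2 * of_bool (\<not> good n x))"
  proof (rule E_mono)
    fix x
    have "bnd n \<ge> 0" unfolding bnd_def by simp
    then show "Phi x \<le> bnd n + (2 * F)^2 * of_bool (\<not> good n x)"
      unfolding Phi_def by (cases "good n x") auto
  qed
  also have "\<dots> = bnd n + (2 * F)^2 * E T (\<lambda>x. of_bool (\<not> good n x))"
    by (simp add: E_add E_cmult E_const[OF T1])
  finally show ?thesis unfolding C_def T_def F_def .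
qed

end

lemma t1: "(r::real) \<ge> 1 \<Longrightarrow> a \<ge> 0 \<Longrightarrow> (r^2 + a) / r^5 \<le> (1 + a) / r^3"
proof -
  assume r: "r \<ge> 1" and a: "a \<ge> 0"
  have "a * r^3 \<le> a * r^5" using r a by (intro mult_left_mono power_increasing) auto
  then show ?thesis using r by (simp add: divide_le_eq le_divide_eq field_simps)
qed

lemma t2: "(r::real) \<ge> 1 \<Longrightarrow> a \<ge> 0 \<Longrightarrow> 0 \<le> W \<Longrightarrow> W \<le> K * r^3 \<Longrightarrow> (r^3 + a) * W / r^10 \<le> (1 + a) * K / r^3"
proof -
  assume r: "r \<ge> 1" and a: "a \<ge> 0" and W: "0 \<le> W" "W \<le> K * r^3"
  have K: "K \<ge> 0"
  proof -
    have "0 \<le> K * r^3" using W by linarith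
    moreover have "r^3 > 0" using r by simp
    ultimately show ?thesis by (simp add: zero_le_mult_iff)
  qed
  have "(r^3 + a) * W \<le> ((1 + a) * r^3) * (K * r^3)"
  proof (rule mult_mono)
    have "a \<le> a * r^3" using r a by (simp add: mult_le_cancel_left1 one_le_power)
    then show "r^3 + a \<le> (1 + a) * r^3" by (simp add: algebra_simps)
  qed (use W r a in auto)
  also have "\<dots> = (1 + a) * K * r^6" by (simp add: algebra_simps power_add[symmetric])
  also have "\<dots> \<le> (1 + a) * K * r^7"
    using r a K by (intro mult_left_mono power_increasing mult_nonneg_nonneg) auto
  finally have X: "(r^3 + a) * W \<le> (1 + a) * K * r^7" .
  have "(r^3 + a) * W / r^10 \<le> ((1 + a) * K * r^7) / r^10" using X r by (intro divide_right_mono) auto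
  moreover have e: "r^10 = r^3 * r^7" by (simp add: power_add[symmetric])
  moreover have "((1 + a) * K * r^7) / r^10 = (1 + a) * K / r^3"
    unfolding e by (rule nonzero_mult_divide_mult_cancel_right) (use r in simp)
  ultimately show ?thesis by linarith
qed

lemma exp_poly_lim:
  assumes k: "(\<kappa>::real) > 0"
  shows "((\<lambda>r. r^10 * exp (- (r / \<kappa>))) \<longlongrightarrow> 0) at_top"
proof -
  have base: "((\<lambda>s::real. s^10 * exp (- s)) \<longlongrightarrow> 0) at_top" by real_asymp
  have lim: "filterlim (\<lambda>r. (1 / \<kappa>) * r) at_top at_top"
    by (rule filterlim_tendsto_pos_mult_at_top[OF tendsto_const]) (use k in \<open>auto simp: filterlim_ident\<close>)
  have "((\<lambda>r. ((1 / \<kappa>) * r)^10 * exp (- ((1 / \<kappa>) * r))) \<longlongrightarrow> 0) at_top"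
    using filterlim_compose[OF base lim] by (simp add: o_def)
  then have "((\<lambda>r. \<kappa>^10 * (((1 / \<kappa>) * r)^10 * exp (- ((1 / \<kappa>) * r)))) \<longlongrightarrow> 0) at_top"
    by (rule tendsto_mult_right_zero)
  moreover have "(\<lambda>r. \<kappa>^10 * (((1 / \<kappa>) * r)^10 * exp (- ((1 / \<kappa>) * r)))) = (\<lambda>r. r^10 * exp (- (r / \<kappa>)))"
    using k by (intro ext) (simp add: power_divide)
  ultimately show ?thesis by simp
qed

context mtil
begin

lemma rho_lim: "filterlim rho at_top sequentially"
  unfolding rho_def[abs_def] by real_asymp

definition "K0 = (4 * He + 3) / pS + 1"

lemma K0_pos: "K0 > 0" unfolding K0_def using He0 pS_pos by (simp add: add_pos_nonneg)

lemma W_le: assumes n1: "n \<ge> 1" shows "real (Wn n) \<le> K0 * rho n ^ 3"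
proof -
  define r where "r = rho n"
  have r1: "r \<ge> 1" unfolding r_def by (rule rho_ge1[OF n1])
  have r3: "r^3 \<ge> 1" using r1 by (simp add: one_le_power)
  define y where "y = (2 * (r ^ 3 + 2 * He) + 1) / pS"
  have y0: "y \<ge> 0" unfolding y_def using pS_pos He0 r1 by simp
  have "real (Wn n) = real_of_int \<lceil>y\<rceil>" unfolding Wn_def y_def r_def using y0 unfolding y_def r_def by simp
  also have "\<dots> \<le> y + 1" using ceiling_correct[of y] by linarith
  finally have Wy: "real (Wn n) \<le> y + 1" .
  have "2 * (r ^ 3 + 2 * He) + 1 \<le> (4 * He + 3) * r^3"
  proof -
    have "4 * He \<le> 4 * He * r^3" using r3 He0 by (simp add: mult_le_cancel_left1)
    then show ?thesis using r3 by (simp add: algebra_simps)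
  qed
  then have "y \<le> ((4 * He + 3) * r^3) / pS" unfolding y_def using pS_pos by (intro divide_right_mono) auto
  also have "((4 * He + 3) * r^3) / pS = (4 * He + 3) / pS * r^3" by simp
  finally have "real (Wn n) \<le> (4 * He + 3) / pS * r^3 + 1" using Wy by linarith
  also have "\<dots> \<le> (4 * He + 3) / pS * r^3 + r^3" using r3 by simp
  also have "\<dots> = K0 * r^3" unfolding K0_def by (simp add: algebra_simps)
  finally show ?thesis unfolding r_def .
qed

lemma nbnd:
  assumes n1: "n \<ge> 1"
  shows "real n * bnd n \<le> (2 * (1 + 2 * Hg) * (1 + K0))^2 / rho n"
proof -
  define r where "r = rho n"
  have r1: "r \<ge> 1" unfolding r_def by (rule rho_ge1[OF n1])
  have r5: "real n = r^5" unfolding r_def by (simp add: rho_pow5)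
  have n2: "(real n)^2 = r^10" unfolding r5 by (simp add: power_mult[symmetric])
  define D where "D = 2 * (1 + 2 * Hg) * (1 + K0)"
  have a1: "(r^2 + 2 * Hg) / r^5 \<le> (1 + 2 * Hg) / r^3" using t1[OF r1, of "2 * Hg"] Hg0 by simp
  have a2: "(r^3 + 2 * Hg) * real (Wn n) / r^10 \<le> (1 + 2 * Hg) * K0 / r^3"
    using t2[OF r1, of "2 * Hg" "real (Wn n)" K0] Hg0 W_le[OF n1] unfolding r_def by simp
  define s where "s = 2 * (r^2 + 2*Hg) / real n + 2 * (r^3 + 2*Hg) * real (Wn n) / (real n)^2"
  have s0: "s \<ge> 0" unfolding s_def using Hg0 r1
    by (intro add_nonneg_nonneg divide_nonneg_nonneg mult_nonneg_nonneg) auto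
  have "s = 2 * ((r^2 + 2 * Hg) / r^5) + 2 * ((r^3 + 2 * Hg) * real (Wn n) / r^10)"
    unfolding s_def r5[symmetric] n2[symmetric] by simp
  also have "\<dots> \<le> 2 * ((1 + 2 * Hg) / r^3) + 2 * ((1 + 2 * Hg) * K0 / r^3)"
    using a1 a2 by linarith
  also have "\<dots> = D / r^3" unfolding D_def by (simp add: add_divide_distrib[symmetric] algebra_simps)
  finally have sD: "s \<le> D / r^3" .
  have "bnd n = s^2" unfolding bnd_def s_def r_def ..
  also have "\<dots> \<le> (D / r^3)^2" using s0 sD by (intro power_mono) auto
  finally have "real n * bnd n \<le> r^5 * (D / r^3)^2" unfolding r5 using r1 by (intro mult_left_mono) auto
  also have "r^5 * (D / r^3)^2 = D^2 / r"
    using r1 by (simp add: field_simps power2_eq_square power_add[symmetric] numeral_eq_Suc)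
  finally show ?thesis unfolding D_def r_def .
qed

end

context mtil
begin

definition "kap = 8 * ce^2 + 4 * K0 * cg^2 + 4 * cg^2"

lemma ce1: "ce \<ge> 1" unfolding ce_def using He0 by simp
lemma cg1: "cg \<ge> 1" unfolding cg_def using Hg0 by simp
lemma kap_pos: "kap > 0" unfolding kap_def using ce1 cg1 K0_pos by (simp add: add_pos_nonneg)

lemma nbad:
  assumes n1: "n \<ge> 1" and W2: "2 * Wn n < n"
  shows "real n * E (2*n+2) (\<lambda>x. of_bool (\<not> good n x)) \<le> (8 + 4 * K0) * (rho n ^ 10 * exp (- (rho n / kap)))"
proof -
  define r where "r = rho n"
  define W where "W = Wn n"
  define Ex where "Ex = exp (- (r / kap))"
  have r1: "r \<ge> 1" unfolding r_def by (rule rho_ge1[OF n1])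
  have r5: "real n = r^5" unfolding r_def by (simp add: rho_pow5)
  have W1: "real W \<ge> 1" unfolding W_def using Wn_ge1[OF n1] by simp
  have WK: "real W \<le> K0 * r^3" unfolding W_def r_def by (rule W_le[OF n1])
  have kp: "kap > 0" by (rule kap_pos)
  have e1: "exp (- (r / (8 * ce^2))) \<le> Ex"
  proof -
    have "r / kap \<le> r / (8 * ce^2)" using r1 ce1 K0_pos cg1 unfolding kap_def
      by (intro divide_left_mono) (auto simp: add_pos_nonneg)
    then show ?thesis unfolding Ex_def by simp
  qed
  have e3: "exp (- (r / (4 * cg^2))) \<le> Ex"
  proof -
    have "r / kap \<le> r / (4 * cg^2)" using r1 ce1 K0_pos cg1 unfolding kap_def
      by (intro divide_left_mono) (auto simp: add_pos_nonneg)
    then show ?thesis unfolding Ex_def by simp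
  qed
  have e2: "exp (- (r ^ 4 / (4 * real W * cg^2))) \<le> Ex"
  proof -
    have "r / kap \<le> r / (4 * K0 * cg^2)" using r1 ce1 K0_pos cg1 unfolding kap_def
      by (intro divide_left_mono) (auto simp: add_pos_nonneg)
    also have "r / (4 * K0 * cg^2) = r^4 / (4 * (K0 * r^3) * cg^2)"
      using r1 K0_pos cg1 by (simp add: field_simps power_add[symmetric] numeral_eq_Suc)
    also have "\<dots> \<le> r^4 / (4 * real W * cg^2)"
      using WK W1 cg1 r1 K0_pos by (intro divide_left_mono mult_right_mono mult_left_mono mult_pos_pos) auto
    finally show ?thesis unfolding Ex_def by simp
  qed
  have Ex0: "Ex \<ge> 0" unfolding Ex_def by simp
  have "E (2*n+2) (\<lambda>x. of_bool (\<not> good n x))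
     \<le> real (2*n) * (2 * exp (- (r / (8 * ce^2)))) + real (2 * W + 1) * (2 * exp (- (r ^ 4 / (4 * real W * cg^2))))
       + 2 * exp (- (r / (4 * cg^2)))"
    using bad_bound[OF n1 W2] unfolding r_def W_def .
  also have "\<dots> \<le> real (2*n) * (2 * Ex) + real (2 * W + 1) * (2 * Ex) + 2 * Ex"
    using e1 e2 e3 by (intro add_mono mult_left_mono) auto
  also have "\<dots> = (4 * r^5 + (4 * real W + 2) + 2) * Ex" unfolding r5[symmetric] by (simp add: algebra_simps)
  also have "\<dots> \<le> (4 * r^5 + (4 * K0 + 2) * r^5 + 2 * r^5) * Ex"
  proof (intro mult_right_mono add_mono order_refl Ex0)
    have r35: "r^3 \<le> r^5" using r1 by (intro power_increasing) auto
    have r05: "1 \<le> r^5" using r1 by (simp add: one_le_power)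
    have "4 * real W \<le> 4 * K0 * r^3" using WK by simp
    also have "\<dots> \<le> 4 * K0 * r^5" using r35 K0_pos by (intro mult_left_mono) auto
    finally show "4 * real W + 2 \<le> (4 * K0 + 2) * r^5" using r05 by (simp add: algebra_simps)
    show "2 \<le> 2 * r^5" using r05 by simp
  qed (use r1 in simp)
  also have "\<dots> = (8 + 4 * K0) * r^5 * Ex" by (simp add: algebra_simps)
  finally have PB: "E (2*n+2) (\<lambda>x. of_bool (\<not> good n x)) \<le> (8 + 4 * K0) * r^5 * Ex" .
  have "real n * E (2*n+2) (\<lambda>x. of_bool (\<not> good n x)) \<le> r^5 * ((8 + 4 * K0) * r^5 * Ex)"
    unfolding r5 using PB r1 by (intro mult_left_mono) auto
  also have "\<dots> = (8 + 4 * K0) * (r^10 * Ex)" by (simp add: algebra_simps power_add[symmetric])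
  finally show ?thesis unfolding r_def Ex_def .
qed

lemma Cvar_lim:
  "(\<lambda>n. real n * prob_space.variance M (\<lambda>\<omega>. mu_tilde S f X (kk n) \<omega> - mu_hat f X n \<omega>)) \<longlonglongrightarrow> 0"
proof -
  interpret prob_space M by (rule ps)
  define Kb where "Kb = (2 * (1 + 2 * Hg) * (1 + K0))^2"
  define Kq where "Kq = (2 * nrm f)^2 * (8 + 4 * K0)"
  define phi where "phi r = Kb / r + Kq * (r^10 * exp (- (r / kap)))" for r :: real
  have philim: "(phi \<longlongrightarrow> 0) at_top"
  proof -
    have a: "((\<lambda>r::real. Kb / r) \<longlongrightarrow> 0) at_top" by real_asymp
    have b: "((\<lambda>r. Kq * (r^10 * exp (- (r / kap)))) \<longlongrightarrow> 0) at_top"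
      by (rule tendsto_mult_right_zero) (rule exp_poly_lim[OF kap_pos])
    show ?thesis unfolding phi_def[abs_def] using tendsto_add[OF a b] by simp
  qed
  have lim2: "(\<lambda>n. phi (rho n)) \<longlonglongrightarrow> 0"
    using filterlim_compose[OF philim rho_lim] by (simp add: o_def)
  have ev: "\<forall>\<^sub>F n in sequentially. rho n \<ge> 2 * K0 + 1"
    using rho_lim unfolding filterlim_at_top by blast
  show ?thesis
  proof (rule tendsto_sandwich[OF _ _ tendsto_const lim2])
    show "\<forall>\<^sub>F n in sequentially. 0 \<le> real n * variance (\<lambda>\<omega>. mu_tilde S f X (kk n) \<omega> - mu_hat f X n \<omega>)"
      by (intro always_eventually allI mult_nonneg_nonneg integral_nonneg_AE) auto
    show "\<forall>\<^sub>F n in sequentially. real n * variance (\<lambda>\<omega>. mu_tilde S f X (kk n) \<omega> - mu_hat f X n \<omega>) \<le> phi (rho n)"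
      using ev eventually_ge_at_top[of 1]
    proof eventually_elim
      case (elim n)
      define r where "r = rho n"
      have r1: "r \<ge> 1" unfolding r_def by (rule rho_ge1) (use elim in simp)
      have W2: "2 * Wn n < n"
      proof -
        have "real (2 * Wn n) \<le> 2 * K0 * r^3" using W_le[of n] elim unfolding r_def by simp
        also have "\<dots> < r^2 * r^3"
          using elim r1 unfolding r_def[symmetric]
          by (intro mult_strict_right_mono) (auto simp: power2_eq_square intro: less_le_trans[of _ "r"] order_trans[of _ r "r*r"] mult_le_cancel_left1)
        also have "r^2 * r^3 = real n" unfolding r_def rho_pow5[symmetric] by (simp add: power_add[symmetric])
        finally show ?thesis by linarith
      qed
      have "real n * variance (\<lambda>\<omega>. mu_tilde S f X (kk n) \<omega> - mu_hat f X n \<omega>)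
          \<le> real n * (bnd n + (2 * nrm f)^2 * E (2*n+2) (\<lambda>x. of_bool (\<not> good n x)))"
        using Cbound[OF _ W2] elim by (intro mult_left_mono) auto
      also have "\<dots> = real n * bnd n + (2 * nrm f)^2 * (real n * E (2*n+2) (\<lambda>x. of_bool (\<not> good n x)))"
        by (simp add: algebra_simps)
      also have "\<dots> \<le> Kb / rho n + (2 * nrm f)^2 * ((8 + 4 * K0) * (rho n ^ 10 * exp (- (rho n / kap))))"
        using nbnd[of n] nbad[OF _ W2] elim unfolding Kb_def by (intro add_mono mult_left_mono) auto
      also have "\<dots> = phi (rho n)" unfolding phi_def Kq_def by (simp add: algebra_simps)
      finally show ?case .
    qed
  qed
qed

end

theorem lemma1:
  fixes M :: "'b measure" and X :: "nat \<Rightarrow> 'b \<Rightarrow> 'a::finite"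
    and p0 :: "'a \<Rightarrow> real" and P :: "'a \<Rightarrow> 'a \<Rightarrow> real" and \<pi> :: "'a \<Rightarrow> real"
    and S :: "'a set" and f :: "'a \<Rightarrow> real" and \<mu> :: real
  assumes "markov_chain M X p0 P"
    and "irreducible_chain P"
    and "invariant_distribution P \<pi>"
    and "S \<noteq> {}"
    and "(\<Sum>x\<in>UNIV. \<pi> x * f x) = \<mu>"
  shows "\<exists>L. (\<lambda>n. real n * prob_space.variance M (mu_hat f X n)) \<longlonglongrightarrow> L
           \<and> (\<lambda>n. real n * prob_space.variance M
                    (mu_tilde S f X (nat \<lceil>real n * dist_mass \<pi> S\<rceil>))) \<longlonglongrightarrow> L"
proof -
  interpret mtil M X p0 P \<pi> f \<mu> S
    by unfold_locales (use assms in auto)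
  interpret prob_space M by (rule ps)
  obtain L where L: "(\<lambda>n. real n * variance (mu_hat f X n)) \<longlonglongrightarrow> L"
    using muhat_limit[OF fmu] by blast
  define VA where "VA n = variance (mu_tilde S f X (kk n))" for n
  define VB where "VB n = variance (mu_hat f X n)" for n
  define VC where "VC n = variance (\<lambda>\<omega>. mu_tilde S f X (kk n) \<omega> - mu_hat f X n \<omega>)" for n
  have VC0: "VC n \<ge> 0" for n unfolding VC_def by (intro integral_nonneg_AE) auto
  have VB0: "VB n \<ge> 0" for n unfolding VB_def by (intro integral_nonneg_AE) auto
  have LB: "(\<lambda>n. real n * VB n) \<longlonglongrightarrow> L" using L unfolding VB_def .
  have LC: "(\<lambda>n. real n * VC n) \<longlonglongrightarrow> 0" using Cvar_lim unfolding VC_def .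
  have diff: "(\<lambda>n. real n * VA n - real n * VB n) \<longlonglongrightarrow> 0"
  proof (rule Lim_null_comparison)
    show "\<forall>\<^sub>F n in sequentially. norm (real n * VA n - real n * VB n) \<le> real n * VC n + 2 * sqrt ((real n * VB n) * (real n * VC n))"
    proof (intro always_eventually allI)
      fix n
      have p: "\<bar>VA n - VB n\<bar> \<le> VC n + 2 * sqrt (VB n * VC n)"
        unfolding VA_def VB_def VC_def by (rule var_perturb[OF mu_tilde_bdd mu_hat_bdd])
      have "norm (real n * VA n - real n * VB n) = real n * \<bar>VA n - VB n\<bar>"
        by (simp add: abs_mult right_diff_distrib[symmetric])
      also have "\<dots> \<le> real n * (VC n + 2 * sqrt (VB n * VC n))" using p by (intro mult_left_mono) auto
      also have "\<dots> = real n * VC n + 2 * (real n * sqrt (VB n * VC n))" by (simp add: algebra_simps)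
      also have "real n * sqrt (VB n * VC n) = sqrt ((real n * VB n) * (real n * VC n))"
        by (simp add: real_sqrt_mult mult_ac)
      finally show "norm (real n * VA n - real n * VB n) \<le> real n * VC n + 2 * sqrt ((real n * VB n) * (real n * VC n))" .
    qed
    have "(\<lambda>n. real n * VC n + 2 * sqrt ((real n * VB n) * (real n * VC n))) \<longlonglongrightarrow> 0 + 2 * sqrt (L * 0)"
      by (intro tendsto_add tendsto_mult tendsto_const tendsto_real_sqrt LB LC)
    then show "(\<lambda>n. real n * VC n + 2 * sqrt ((real n * VB n) * (real n * VC n))) \<longlonglongrightarrow> 0" by simp
  qed
  have "(\<lambda>n. (real n * VA n - real n * VB n) + real n * VB n) \<longlonglongrightarrow> 0 + L"
    by (intro tendsto_add diff LB)
  then have LA: "(\<lambda>n. real n * VA n) \<longlonglongrightarrow> L" by simp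
  have kk_eq: "kk n = nat \<lceil>real n * dist_mass \<pi> S\<rceil>" for n unfolding kk_def pS_def ..
  show ?thesis using L LA unfolding VA_def kk_eq by blast
qed

end
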